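(* For a real Banach space $X$ the following are equivalent: (a) $X^*$ is uniformly w*-denting, i.e. $d^*(t) > 0$ for all $0<t<2$. (b) For every $\varepsilon>0$ there exists $\delta(\varepsilon)>0$ such that $F_\varepsilon \subseteq (1-\delta(\varepsilon)) B(X^* )$. (c) $X^*$ is uniformly convex. (d) $X^*$ is uniformly w*-denting (I). (e) $X$ has the H-UMIP.
   Context: $B(\cdot)$, $S(\cdot)$ denote closed unit ball and unit sphere. For $x \in S(X)$ and real $\alpha$, the w*-slice is $S(B(X^* ), x, \alpha) := \{g \in B(X^* ) : g(x) > \alpha\}$; w*-slices of $B(X^* )$ are the sets $S(B(X^* ),x,\alpha)$ with $x \in S(X)$, $0<\alpha<1$. For $0<t<2$, $f \in S(X^* )$, $x \in S(X)$: $s^*(f,x,t) := \inf\{\|f+h\| - 1 : h\in X^*,\ \|h\| \geq t/4,\ h(x)=0\}$; $d^*(f,t) := \sup_{x\in S(X)} s^*(f,x,t)$; $d^*(t) := \inf_{f\in S(X^* )} d^*(f,t)$. For $\varepsilon>0$, $F_\varepsilon := B(X^* ) \setminus \bigcup\{S : S \text{ a w*-slice of } B(X^* ) \text{ with } \operatorname{diam}(S) < \varepsilon\}$. A Banach space $Y$ is uniformly convex if $\delta_Y(t) := \inf\{1 - \|x+y\|/2 : x,y \in S(Y),\ \|x-y\| \geq t\} > 0$ for all $t>0$. $X^*$ is uniformly w*-denting (I) if for every $\varepsilon>0$ there exists $0<\alpha<1$ such that for every $f \in S(X^* )$ there is $x \in S(X)$ with $f(x) > \alpha$ and $\operatorname{diam}(S(B(X^*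 ),x,\alpha)) < \varepsilon$. $X$ has the Hyperplane UMIP (H-UMIP) if for every $\varepsilon>0$ and every $M \geq 1$ there is $K>0$ such that whenever $C \subseteq X$ is closed convex and $f \in S(X^* )$ satisfy $\sup\{\|x\| : x \in C\} \leq M$ and $\inf f(C) \geq \varepsilon$, there is a closed ball $B[x_0,r_0] \supseteq C$ with $\inf f(B[x_0,r_0]) \geq \varepsilon/2$ and $r_0 \leq K$. *)

theory Defs
  imports "HOL-Analysis.Analysis"
begin

(* The dual space X^dual of a real Banach space X is modelled as the type
  of bounded linear functionals  'a =>L real  with the operator norm.  *)

definition wslice :: "'a::real_normed_vector \<Rightarrow> real \<Rightarrow> ('a \<Rightarrow>\<^sub>L real) set" where
  "wslice x \<alpha> = {g. norm g \<le> 1 \<and> blinfun_apply g x > \<alpha>}"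

(* s_star(f,x,t) = inf{ ||f+h|| - 1 : ||h|| >= t/4, h(x) = 0 } (extended-real infimum,
  so the infimum of the empty set is +infinity).  *)
definition s_star :: "('a::real_normed_vector \<Rightarrow>\<^sub>L real) \<Rightarrow> 'a \<Rightarrow> real \<Rightarrow> ereal" where
  "s_star f x t = (INF h \<in> {h :: 'a \<Rightarrow>\<^sub>L real. norm h \<ge> t / 4 \<and> blinfun_apply h x = 0}.
                     ereal (norm (f + h) - 1))"

definition d_star_f :: "('a::real_normed_vector \<Rightarrow>\<^sub>L real) \<Rightarrow> real \<Rightarrow> ereal" where
  "d_star_f f t = (SUP x \<in> sphere (0::'a) 1. s_star f x t)"

definition d_star :: "'a::real_normed_vector itself \<Rightarrow> real \<Rightarrow> ereal" where
  "d_star _ t = (INF f \<in> sphere (0::'a \<Rightarrow>\<^sub>L real) 1. d_star_f f t)"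

definition F_eps :: "'a::real_normed_vector itself \<Rightarrow> real \<Rightarrow> ('a \<Rightarrow>\<^sub>L real) set" where
  "F_eps _ \<epsilon> = cball 0 1 - \<Union> {S. \<exists>(x::'a) \<alpha>. norm x = 1 \<and> 0 < \<alpha> \<and> \<alpha> < 1 \<and>
                         S = wslice x \<alpha> \<and> diameter S < \<epsilon>}"

definition modulus_convexity :: "'b::real_normed_vector itself \<Rightarrow> real \<Rightarrow> ereal" where
  "modulus_convexity _ t = (INF p \<in> {(x::'b, y). norm x = 1 \<and> norm y = 1 \<and> norm (x - y) \<ge> t}.
                              ereal (1 - norm (fst p + snd p) / 2))"

definition uniformly_convex :: "'b::real_normed_vector itself \<Rightarrow> bool" where
  "uniformly_convex T \<longleftrightarrow> (\<forall>t>0. modulus_convexity T t > 0)"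

definition uniformly_wstar_denting_I :: "'a::real_normed_vector itself \<Rightarrow> bool" where
  "uniformly_wstar_denting_I _ \<longleftrightarrow>
     (\<forall>\<epsilon>>0. \<exists>\<alpha>. 0 < \<alpha> \<and> \<alpha> < 1 \<and>
        (\<forall>f :: 'a \<Rightarrow>\<^sub>L real. norm f = 1 \<longrightarrow>
           (\<exists>x. norm x = 1 \<and> blinfun_apply f x > \<alpha> \<and> diameter (wslice x \<alpha>) < \<epsilon>)))"

definition H_UMIP :: "'a::real_normed_vector itself \<Rightarrow> bool" where
  "H_UMIP _ \<longleftrightarrow>
     (\<forall>\<epsilon>>0. \<forall>M\<ge>1. \<exists>K>0. \<forall>(C::'a set) (f::'a \<Rightarrow>\<^sub>L real).
        closed C \<and> convex C \<and> norm f = 1 \<and> (\<forall>x\<in>C. norm x \<le> M) \<and>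
        (\<forall>x\<in>C. blinfun_apply f x \<ge> \<epsilon>) \<longrightarrow>
        (\<exists>x0 r0. 0 \<le> r0 \<and> C \<subseteq> cball x0 r0 \<and>
                 (\<forall>y\<in>cball x0 r0. blinfun_apply f y \<ge> \<epsilon> / 2) \<and> r0 \<le> K))"

end

theory Submission
  imports Defs
begin


definition hbgood :: "'a::real_normed_vector \<Rightarrow> ('a \<times> real) set \<Rightarrow> bool" where
 "hbgood x0 G \<longleftrightarrow> (x0, norm x0) \<in> G \<and> (\<forall>a u v. (a,u)\<in>G \<longrightarrow> (a,v)\<in>G \<longrightarrow> u = v)
   \<and> (\<forall>a b u v. (a,u)\<in>G \<longrightarrow> (b,v)\<in>G \<longrightarrow> (a+b,u+v)\<in>G)
   \<and> (\<forall>a u c. (a,u)\<in>G \<longrightarrow> (c *\<^sub>R a, c*u)\<in>G) \<and> (\<forall>a u. (a,u)\<in>G \<longrightarrow> u \<le> norm a)"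

lemma hbgood_init: "hbgood x0 {(c *\<^sub>R x0, c * norm x0) | c. True}"
  unfolding hbgood_def
proof (intro conjI allI impI)
  show "(x0, norm x0) \<in> {(c *\<^sub>R x0, c * norm x0) |c. True}"
    by (rule CollectI, rule exI[of _ 1]) simp
next
  fix a u v assume "(a, u) \<in> {(c *\<^sub>R x0, c * norm x0) |c. True}" "(a, v) \<in> {(c *\<^sub>R x0, c * norm x0) |c. True}"
  then obtain c d where "a = c *\<^sub>R x0" "u = c * norm x0" "a = d *\<^sub>R x0" "v = d * norm x0" by blast
  note E = this
  show "u = v"
  proof (cases "x0 = 0")
    case True then show ?thesis using E by simp
  next
    case False
    have "c *\<^sub>R x0 = d *\<^sub>R x0" using E(1) E(3) by metis
    then have "c = d" using False by (metis scaleR_cancel_right)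
    then show ?thesis using E by simp
  qed
next
  fix a b u v assume "(a, u) \<in> {(c *\<^sub>R x0, c * norm x0) |c. True}" "(b, v) \<in> {(c *\<^sub>R x0, c * norm x0) |c. True}"
  then obtain c d where "a = c *\<^sub>R x0" "u = c * norm x0" "b = d *\<^sub>R x0" "v = d * norm x0" by auto
  then show "(a + b, u + v) \<in> {(c *\<^sub>R x0, c * norm x0) |c. True}"
    by (auto intro!: exI[of _ "c+d"] simp: scaleR_add_left algebra_simps)
next
  fix a u e assume "(a, u) \<in> {(c *\<^sub>R x0, c * norm x0) |c. True}"
  then obtain c where "a = c *\<^sub>R x0" "u = c * norm x0" by auto
  then show "(e *\<^sub>R a, e * u) \<in> {(c *\<^sub>R x0, c * norm x0) |c. True}"
    by (auto intro!: exI[of _ "e*c"])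
next
  fix a u assume "(a, u) \<in> {(c *\<^sub>R x0, c * norm x0) |c. True}"
  then obtain c where "a = c *\<^sub>R x0" "u = c * norm x0" by auto
  then show "u \<le> norm a" by (simp add: mult_right_mono)
qed

lemma hbgood_chain:
  assumes C: "C \<in> chains {G. hbgood x0 G}" and ne: "C \<noteq> {}"
  shows "hbgood x0 (\<Union>C)"
proof -
  have sub: "\<And>G. G \<in> C \<Longrightarrow> hbgood x0 G" using C by (auto simp: chains_def)
  have ch: "\<And>G H. G \<in> C \<Longrightarrow> H \<in> C \<Longrightarrow> G \<subseteq> H \<or> H \<subseteq> G" using C by (auto simp: chains_def chain_subset_def)
  have two: "\<exists>G\<in>C. p \<in> G \<and> q \<in> G" if P: "p \<in> \<Union>C" "q \<in> \<Union>C" for p q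
  proof -
    obtain G where "G \<in> C" "p \<in> G" using P(1) by blast
    obtain H where "H \<in> C" "q \<in> H" using P(2) by blast
    show ?thesis
    proof (cases "G \<subseteq> H")
      case True then show ?thesis using \<open>H \<in> C\<close> \<open>p \<in> G\<close> \<open>q \<in> H\<close> by blast
    next
      case False then have "H \<subseteq> G" using ch[OF \<open>G \<in> C\<close> \<open>H \<in> C\<close>] by blast
      then show ?thesis using \<open>G \<in> C\<close> \<open>p \<in> G\<close> \<open>q \<in> H\<close> by blast
    qed
  qed
  obtain G0 where "G0 \<in> C" using ne by auto
  show ?thesis unfolding hbgood_def
  proof (intro conjI allI impI)
    show "(x0, norm x0) \<in> \<Union> C" using sub[OF \<open>G0 \<in> C\<close>] \<open>G0 \<in> C\<close> unfolding hbgood_def by blast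
  next
    fix a u v assume "(a, u) \<in> \<Union> C" "(a, v) \<in> \<Union> C"
    then obtain G where "G \<in> C" "(a,u) \<in> G" "(a,v) \<in> G" using two by blast
    then show "u = v" using sub[OF \<open>G \<in> C\<close>] unfolding hbgood_def by blast
  next
    fix a b u v assume "(a, u) \<in> \<Union> C" "(b, v) \<in> \<Union> C"
    then obtain G where "G \<in> C" "(a,u) \<in> G" "(b,v) \<in> G" using two by blast
    then show "(a + b, u + v) \<in> \<Union> C" using sub[OF \<open>G \<in> C\<close>] unfolding hbgood_def by blast
  next
    fix a u c assume "(a, u) \<in> \<Union> C"
    then obtain G where "G \<in> C" "(a,u) \<in> G" by blast
    then show "(c *\<^sub>R a, c * u) \<in> \<Union> C" using sub[OF \<open>G \<in> C\<close>] unfolding hbgood_def by blast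
  next
    fix a u assume "(a, u) \<in> \<Union> C"
    then obtain G where "G \<in> C" "(a,u) \<in> G" by blast
    then show "u \<le> norm a" using sub[OF \<open>G \<in> C\<close>] unfolding hbgood_def by blast
  qed
qed

lemma hbgood_total:
  assumes M: "hbgood x0 M" and max: "\<forall>X\<in>{G. hbgood x0 G}. M \<subseteq> X \<longrightarrow> X = M"
  shows "\<exists>u. (y, u) \<in> M"
proof (rule ccontr)
  assume ny: "\<not> (\<exists>u. (y, u) \<in> M)"
  have fnc: "\<And>a u v. (a,u)\<in>M \<Longrightarrow> (a,v)\<in>M \<Longrightarrow> u = v"
   and add: "\<And>a b u v. (a,u)\<in>M \<Longrightarrow> (b,v)\<in>M \<Longrightarrow> (a+b,u+v)\<in>M"
   and scl: "\<And>a u c. (a,u)\<in>M \<Longrightarrow> (c *\<^sub>R a, c*u)\<in>M"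
   and dom: "\<And>a u. (a,u)\<in>M \<Longrightarrow> u \<le> norm a"
   and x0: "(x0, norm x0) \<in> M" using M unfolding hbgood_def by blast+
  have z: "(0,0) \<in> M" using scl[OF x0, of 0] by simp
  define S where "S = (\<lambda>p. snd p - norm (fst p - y)) ` M"
  have key: "u - norm (a - y) \<le> norm (b + y) - v" if "(a,u)\<in>M" "(b,v)\<in>M" for a u b v
  proof -
    have "u + v \<le> norm (a + b)" using dom[OF add[OF that]] .
    also have "norm (a + b) \<le> norm (a - y) + norm (b + y)"
      using norm_triangle_ineq[of "a - y" "b + y"] by simp
    finally show ?thesis by simp
  qed
  have Sne: "S \<noteq> {}" using z unfolding S_def by auto
  have Sbdd: "bdd_above S" unfolding S_def bdd_above_def using key[OF _ z] by force
  define r where "r = Sup S"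
  have rlow: "u - norm (a - y) \<le> r" if "(a,u)\<in>M" for a u
    unfolding r_def using cSup_upper[OF _ Sbdd, of "u - norm (a - y)"] that unfolding S_def by force
  have rup: "r \<le> norm (b + y) - v" if "(b,v)\<in>M" for b v
    unfolding r_def using key[OF _ that] Sne by (intro cSup_least) (auto simp: S_def)
  define G where "G = {(a + c *\<^sub>R y, u + c * r) | a u c. (a,u)\<in>M}"
  have Gmem: "(a + c *\<^sub>R y, u + c * r) \<in> G" if "(a,u)\<in>M" for a u c
    unfolding G_def using that by fastforce
  have MG: "M \<subseteq> G" unfolding G_def by force
  have ydom: "False" if "(a,u)\<in>M" "(a',u')\<in>M" "a + c *\<^sub>R y = a' + c' *\<^sub>R y" "c \<noteq> c'" for a u a' u' c c'
  proof -
    have "(c - c') *\<^sub>R y = a' - a" using that(3) by (simp add: algebra_simps)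
    moreover have "y = (1/(c - c')) *\<^sub>R ((c - c') *\<^sub>R y)" using that(4) by simp
    ultimately have "y = (1/(c - c')) *\<^sub>R (a' + (-1) *\<^sub>R a)" by simp
    moreover have "((1/(c - c')) *\<^sub>R (a' + (-1) *\<^sub>R a), (1/(c-c')) * (u' + (-1) * u)) \<in> M"
      using scl[OF add[OF that(2) scl[OF that(1)]]] .
    ultimately show False using ny by auto
  qed
  have "hbgood x0 G" unfolding hbgood_def
  proof (intro conjI allI impI)
    show "(x0, norm x0) \<in> G" using MG x0 by auto
  next
    fix p u v assume "(p, u) \<in> G" "(p, v) \<in> G"
    then obtain a u1 c a' u1' c' where A: "(a,u1)\<in>M" "p = a + c *\<^sub>R y" "u = u1 + c * r"
      "(a',u1')\<in>M" "p = a' + c' *\<^sub>R y" "v = u1' + c' * r" unfolding G_def by blast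
    then have "c = c'" using ydom by metis
    then have "a = a'" using A by simp
    then show "u = v" using A fnc \<open>c = c'\<close> by auto
  next
    fix p q u v assume "(p, u) \<in> G" "(q, v) \<in> G"
    then obtain a u1 c a' u1' c' where A: "(a,u1)\<in>M" "p = a + c *\<^sub>R y" "u = u1 + c * r"
      "(a',u1')\<in>M" "q = a' + c' *\<^sub>R y" "v = u1' + c' * r" unfolding G_def by blast
    then have "p + q = (a + a') + (c + c') *\<^sub>R y" "u + v = (u1 + u1') + (c + c') * r"
      by (auto simp: algebra_simps)
    then show "(p + q, u + v) \<in> G" using Gmem[OF add[OF A(1) A(4)]] by simp
  next
    fix p u e assume "(p, u) \<in> G"
    then obtain a u1 c where A: "(a,u1)\<in>M" "p = a + c *\<^sub>R y" "u = u1 + c * r" unfolding G_def by blast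
    then have "e *\<^sub>R p = e *\<^sub>R a + (e * c) *\<^sub>R y" "e * u = e * u1 + (e * c) * r"
      by (auto simp: algebra_simps)
    then show "(e *\<^sub>R p, e * u) \<in> G" using Gmem[OF scl[OF A(1)]] by simp
  next
    fix p u assume "(p, u) \<in> G"
    then obtain a u1 c where A: "(a,u1)\<in>M" "p = a + c *\<^sub>R y" "u = u1 + c * r" unfolding G_def by blast
    consider "c = 0" | "c > 0" | "c < 0" by linarith
    then show "u \<le> norm p"
    proof cases
      case 1 then show ?thesis using A dom by simp
    next
      case 2
      have "((1/c) *\<^sub>R a, (1/c) * u1) \<in> M" using scl[OF A(1)] by blast
      have "r \<le> norm ((1/c) *\<^sub>R a + y) - (1/c) * u1" using rup[OF \<open>((1/c) *\<^sub>R a, (1/c) * u1) \<in> M\<close>] .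
      then have "c * r \<le> c * (norm ((1/c) *\<^sub>R a + y) - (1/c) * u1)" using 2
        by (simp add: mult_left_mono)
      then have "c * r \<le> c * norm ((1/c) *\<^sub>R a + y) - u1" using 2
        by (simp add: right_diff_distrib)
      also have "c * norm ((1/c) *\<^sub>R a + y) = norm (c *\<^sub>R ((1/c) *\<^sub>R a + y))" using 2 by simp
      also have "c *\<^sub>R ((1/c) *\<^sub>R a + y) = p" using 2 A by (simp add: scaleR_add_right)
      finally show ?thesis using A by simp
    next
      case 3
      define d where "d = - c"
      have d: "d > 0" using 3 d_def by simp
      have "((1/d) *\<^sub>R a, (1/d) * u1) \<in> M" using scl[OF A(1)] by blast
      from rlow[OF this] have "(1/d) * u1 - r \<le> norm ((1/d) *\<^sub>R a - y)" by simp
      then have "d * ((1/d) * u1 - r) \<le> d * norm ((1/d) *\<^sub>R a - y)" using d by (simp add: mult_left_mono)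
      also have "d * norm ((1/d) *\<^sub>R a - y) = norm (d *\<^sub>R ((1/d) *\<^sub>R a - y))" using d by simp
      also have "d *\<^sub>R ((1/d) *\<^sub>R a - y) = p" using d A by (simp add: scaleR_diff_right d_def)
      finally show ?thesis using A d by (simp add: d_def right_diff_distrib)
    qed
  qed
  then have "G = M" using max MG by blast
  moreover have "(y, r) \<in> G" using Gmem[OF z, of 1] by simp
  ultimately show False using ny by auto
qed

lemma hahn_banach_norming:
  fixes x0 :: "'a::real_normed_vector"
  shows "\<exists>k::'a \<Rightarrow>\<^sub>L real. norm k \<le> 1 \<and> blinfun_apply k x0 = norm x0"
proof -
  have "\<forall>C\<in>chains {G. hbgood x0 G}. \<exists>U\<in>{G. hbgood x0 G}. \<forall>X\<in>C. X \<subseteq> U"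
  proof
    fix C assume C: "C \<in> chains {G. hbgood x0 G}"
    show "\<exists>U\<in>{G. hbgood x0 G}. \<forall>X\<in>C. X \<subseteq> U"
    proof (cases "C = {}")
      case True then show ?thesis using hbgood_init[of x0] by blast
    next
      case False then show ?thesis using hbgood_chain[OF C False] by blast
    qed
  qed
  from Zorn_Lemma2[OF this] obtain M where M: "hbgood x0 M"
    and max: "\<forall>X\<in>{G. hbgood x0 G}. M \<subseteq> X \<longrightarrow> X = M" by blast
  have fnc: "\<And>a u v. (a,u)\<in>M \<Longrightarrow> (a,v)\<in>M \<Longrightarrow> u = v"
   and add: "\<And>a b u v. (a,u)\<in>M \<Longrightarrow> (b,v)\<in>M \<Longrightarrow> (a+b,u+v)\<in>M"
   and scl: "\<And>a u c. (a,u)\<in>M \<Longrightarrow> (c *\<^sub>R a, c*u)\<in>M"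
   and dom: "\<And>a u. (a,u)\<in>M \<Longrightarrow> u \<le> norm a"
   and x0: "(x0, norm x0) \<in> M" using M unfolding hbgood_def by blast+
  define k where "k z = (THE u. (z,u) \<in> M)" for z
  have kM: "(z, k z) \<in> M" for z
  proof -
    obtain u where u: "(z,u) \<in> M" using hbgood_total[OF M max] by blast
    then have "k z = u" unfolding k_def using fnc by blast
    then show ?thesis using u by simp
  qed
  have keq: "k z = u" if "(z,u) \<in> M" for z u using fnc[OF kM that] .
  have kadd: "k (a + b) = k a + k b" for a b using keq[OF add[OF kM kM]] .
  have kscl: "k (c *\<^sub>R a) = c *\<^sub>R k a" for c a using keq[OF scl[OF kM]] by simp
  have kle: "k z \<le> norm z" for z using dom[OF kM] .
  have kabs: "norm (k z) \<le> norm z * 1" for z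
  proof -
    have "- k z = k ((-1) *\<^sub>R z)" using kscl[of "-1" z] by simp
    also have "\<dots> \<le> norm z" using kle[of "(-1) *\<^sub>R z"] by simp
    finally show ?thesis using kle[of z] by simp
  qed
  have bl: "bounded_linear k" by (rule bounded_linear_intro[OF kadd kscl kabs])
  have "norm (Blinfun k) \<le> 1"
    by (rule norm_blinfun_bound) (use kabs in \<open>auto simp: bounded_linear_Blinfun_apply[OF bl]\<close>)
  moreover have "blinfun_apply (Blinfun k) x0 = norm x0"
    using keq[OF x0] by (simp add: bounded_linear_Blinfun_apply[OF bl])
  ultimately show ?thesis by blast
qed




definition UCd :: "'a::real_normed_vector itself \<Rightarrow> bool" where
  "UCd _ \<longleftrightarrow> (\<forall>\<tau>>0. \<exists>\<delta>>0. \<forall>f g :: 'a \<Rightarrow>\<^sub>L real. norm f = 1 \<longrightarrow> norm g = 1 \<longrightarrow>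
      \<tau> \<le> norm (f - g) \<longrightarrow> norm (f + g) \<le> 2 - 2*\<delta>)"

definition PA :: "'a::real_normed_vector itself \<Rightarrow> bool" where
  "PA _ \<longleftrightarrow> (\<forall>t. 0<t \<and> t<2 \<longrightarrow> (\<exists>c>0. \<forall>m::'a\<Rightarrow>\<^sub>L real. norm m = 1 \<longrightarrow>
     (\<exists>x::'a. norm x = 1 \<and> (\<forall>h::'a\<Rightarrow>\<^sub>L real. blinfun_apply h x = 0 \<longrightarrow> t/4 \<le> norm h \<longrightarrow> 1 + c \<le> norm (m + h)))))"

lemma uc_iff:
  "uniformly_convex TYPE('a::real_normed_vector \<Rightarrow>\<^sub>L real) \<longleftrightarrow> UCd TYPE('a)"
proof
  assume U: "uniformly_convex TYPE('a \<Rightarrow>\<^sub>L real)"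
  show "UCd TYPE('a)" unfolding UCd_def
  proof (intro allI impI)
    fix \<tau> :: real assume "\<tau> > 0"
    then have "0 < modulus_convexity TYPE('a \<Rightarrow>\<^sub>L real) \<tau>" using U unfolding uniformly_convex_def by blast
    then obtain z where z: "0 < ereal z" "ereal z < modulus_convexity TYPE('a \<Rightarrow>\<^sub>L real) \<tau>"
      using ereal_dense2 by blast
    show "\<exists>\<delta>>0. \<forall>f g :: 'a \<Rightarrow>\<^sub>L real. norm f = 1 \<longrightarrow> norm g = 1 \<longrightarrow> \<tau> \<le> norm (f - g) \<longrightarrow> norm (f + g) \<le> 2 - 2*\<delta>"
    proof (intro exI[of _ z] conjI allI impI)
      show "0 < z" using z by simp
      fix f g :: "'a \<Rightarrow>\<^sub>L real" assume "norm f = 1" "norm g = 1" "\<tau> \<le> norm (f - g)"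
      then have "(f, g) \<in> {(x, y). norm x = 1 \<and> norm y = 1 \<and> norm (x - y) \<ge> \<tau>}" by simp
      from less_INF_D[OF z(2)[unfolded modulus_convexity_def] this]
      have "z < 1 - norm (f + g) / 2" by simp
      then show "norm (f + g) \<le> 2 - 2*z" by simp
    qed
  qed
next
  assume U: "UCd TYPE('a)"
  show "uniformly_convex TYPE('a \<Rightarrow>\<^sub>L real)" unfolding uniformly_convex_def
  proof (intro allI impI)
    fix \<tau> :: real assume "\<tau> > 0"
    then obtain \<delta> where d: "\<delta> > 0" "\<And>f g :: 'a \<Rightarrow>\<^sub>L real. norm f = 1 \<Longrightarrow> norm g = 1 \<Longrightarrow>
      \<tau> \<le> norm (f - g) \<Longrightarrow> norm (f + g) \<le> 2 - 2*\<delta>" using U unfolding UCd_def by blast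
    have "ereal \<delta> \<le> modulus_convexity TYPE('a \<Rightarrow>\<^sub>L real) \<tau>" unfolding modulus_convexity_def
    proof (rule INF_greatest)
      fix p assume "p \<in> {(x::'a \<Rightarrow>\<^sub>L real, y). norm x = 1 \<and> norm y = 1 \<and> norm (x - y) \<ge> \<tau>}"
      then obtain f g where p: "p = (f, g)" "norm f = 1" "norm g = 1" "\<tau> \<le> norm (f - g)" by blast
      then have "norm (f + g) \<le> 2 - 2*\<delta>" using d(2) by blast
      then show "ereal \<delta> \<le> ereal (1 - norm (fst p + snd p) / 2)" using p(1) by simp
    qed
    then show "0 < modulus_convexity TYPE('a \<Rightarrow>\<^sub>L real) \<tau>" using d(1)
      by (meson ereal_less(2) order_less_le_trans zero_ereal_def)
  qed
qed

lemma A_iff: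
  "(\<forall>t. 0 < t \<and> t < 2 \<longrightarrow> d_star (X::'a::real_normed_vector itself) t > 0) \<longleftrightarrow> PA TYPE('a)"
proof
  assume A: "\<forall>t. 0 < t \<and> t < 2 \<longrightarrow> d_star X t > 0"
  show "PA TYPE('a)" unfolding PA_def
  proof (intro allI impI)
    fix t :: real assume t: "0 < t \<and> t < 2"
    then have "0 < d_star X t" using A by blast
    then obtain c where c: "0 < ereal c" "ereal c < d_star X t" using ereal_dense2 by blast
    show "\<exists>c>0. \<forall>m::'a\<Rightarrow>\<^sub>L real. norm m = 1 \<longrightarrow>
     (\<exists>x::'a. norm x = 1 \<and> (\<forall>h::'a\<Rightarrow>\<^sub>L real. blinfun_apply h x = 0 \<longrightarrow> t/4 \<le> norm h \<longrightarrow> 1 + c \<le> norm (m + h)))"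
    proof (intro exI[of _ c] conjI allI impI)
      show "0 < c" using c by simp
      fix m :: "'a \<Rightarrow>\<^sub>L real" assume "norm m = 1"
      then have "ereal c < d_star_f m t" using less_INF_D[OF c(2)[unfolded d_star_def]] by simp
      then obtain x where x: "x \<in> sphere (0::'a) 1" "ereal c < s_star m x t"
        unfolding d_star_f_def by (auto simp: less_SUP_iff)
      show "\<exists>x::'a. norm x = 1 \<and> (\<forall>h::'a\<Rightarrow>\<^sub>L real. blinfun_apply h x = 0 \<longrightarrow> t/4 \<le> norm h \<longrightarrow> 1 + c \<le> norm (m + h))"
      proof (intro exI[of _ x] conjI allI impI)
        show "norm x = 1" using x by simp
        fix h :: "'a \<Rightarrow>\<^sub>L real" assume "blinfun_apply h x = 0" "t/4 \<le> norm h"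
        then have "ereal c < ereal (norm (m + h) - 1)"
          using less_INF_D[OF x(2)[unfolded s_star_def]] by simp
        then show "1 + c \<le> norm (m + h)" by simp
      qed
    qed
  qed
next
  assume P: "PA TYPE('a)"
  show "\<forall>t. 0 < t \<and> t < 2 \<longrightarrow> d_star X t > 0"
  proof (intro allI impI)
    fix t :: real assume t: "0 < t \<and> t < 2"
    then obtain c where c: "c > 0" "\<And>m::'a\<Rightarrow>\<^sub>L real. norm m = 1 \<Longrightarrow>
     (\<exists>x::'a. norm x = 1 \<and> (\<forall>h::'a\<Rightarrow>\<^sub>L real. blinfun_apply h x = 0 \<longrightarrow> t/4 \<le> norm h \<longrightarrow> 1 + c \<le> norm (m + h)))"
      using P unfolding PA_def by blast
    have "ereal c \<le> d_star X t" unfolding d_star_def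
    proof (rule INF_greatest)
      fix m :: "'a \<Rightarrow>\<^sub>L real" assume "m \<in> sphere 0 1"
      then obtain x where x: "norm x = 1" "\<And>h::'a\<Rightarrow>\<^sub>L real. blinfun_apply h x = 0 \<Longrightarrow> t/4 \<le> norm h \<Longrightarrow> 1 + c \<le> norm (m + h)"
        using c(2)[of m] by auto
      have "ereal c \<le> s_star m x t" unfolding s_star_def
      proof (rule INF_greatest)
        fix h assume "h \<in> {h :: 'a \<Rightarrow>\<^sub>L real. norm h \<ge> t / 4 \<and> blinfun_apply h x = 0}"
        then have "1 + c \<le> norm (m + h)" using x(2) by blast
        then show "ereal c \<le> ereal (norm (m + h) - 1)" by simp
      qed
      also have "\<dots> \<le> d_star_f m t" unfolding d_star_f_def
        by (rule SUP_upper) (use x(1) in simp)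
      finally show "ereal c \<le> d_star_f m t" .
    qed
    then show "d_star X t > 0" using c(1)
      by (meson ereal_less(2) order_less_le_trans zero_ereal_def)
  qed
qed




lemma unit_gt:
  fixes f :: "'a::real_normed_vector \<Rightarrow>\<^sub>L real"
  assumes "0 \<le> \<rho>" "\<rho> < norm f"
  shows "\<exists>v. norm v = 1 \<and> \<rho> < blinfun_apply f v"
proof (rule ccontr)
  assume "\<not> ?thesis"
  then have H: "\<And>v. norm v = 1 \<Longrightarrow> blinfun_apply f v \<le> \<rho>" by force
  have "norm f \<le> \<rho>"
  proof (rule norm_blinfun_bound[OF assms(1)])
    fix x show "norm (blinfun_apply f x) \<le> \<rho> * norm x"
    proof (cases "x = 0")
      case True then show ?thesis by simp
    next
      case False
      then have nx: "norm x > 0" by simp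
      have v1: "norm ((1/norm x) *\<^sub>R x) = 1" "norm (- ((1/norm x) *\<^sub>R x)) = 1" using nx by simp_all
      have e1: "blinfun_apply f ((1/norm x) *\<^sub>R x) = blinfun_apply f x / norm x"
        by (simp add: blinfun.scaleR_right)
      have e2: "blinfun_apply f (- ((1/norm x) *\<^sub>R x)) = - (blinfun_apply f x / norm x)"
        by (simp add: blinfun.scaleR_right blinfun.minus_right)
      have "blinfun_apply f x / norm x \<le> \<rho>" "- (blinfun_apply f x / norm x) \<le> \<rho>"
        using H[OF v1(1)] H[OF v1(2)] e1 e2 by simp_all
      then have "blinfun_apply f x / norm x \<le> \<rho>" "(- blinfun_apply f x) / norm x \<le> \<rho>" by simp_all
      then have "blinfun_apply f x \<le> \<rho> * norm x" "- blinfun_apply f x \<le> \<rho> * norm x"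
        using pos_divide_le_eq[OF nx] by blast+
      then show ?thesis by simp
    qed
  qed
  then show False using assms(2) by simp
qed

lemma normalize_close:
  fixes f :: "'b::real_normed_vector"
  assumes "norm f > 0" "norm f \<le> 1"
  shows "norm ((1/norm f) *\<^sub>R f) = 1" "norm ((1/norm f) *\<^sub>R f - f) = 1 - norm f"
proof -
  show "norm ((1/norm f) *\<^sub>R f) = 1" using assms by simp
  have "(1/norm f) *\<^sub>R f - f = (1/norm f - 1) *\<^sub>R f" by (simp add: scaleR_diff_left)
  then have "norm ((1/norm f) *\<^sub>R f - f) = \<bar>1/norm f - 1\<bar> * norm f" by simp
  also have "\<bar>1/norm f - 1\<bar> = 1/norm f - 1" using assms by (simp add: field_simps)
  also have "(1/norm f - 1) * norm f = 1 - norm f" using assms by (simp add: field_simps)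
  finally show "norm ((1/norm f) *\<^sub>R f - f) = 1 - norm f" .
qed

lemma norm3: "norm (a - b - c) \<le> norm a + norm b + norm (c::'b::real_normed_vector)"
proof -
  have "norm (a - b - c) \<le> norm (a - b) + norm c" by (rule norm_triangle_ineq4)
  also have "norm (a - b) \<le> norm a + norm b" by (rule norm_triangle_ineq4)
  finally show ?thesis by simp
qed

lemma UCB:
  assumes U: "UCd TYPE('a::real_normed_vector)" and tau: "\<tau> > 0"
  shows "\<exists>\<eta>>0. \<eta> \<le> 1 \<and> (\<forall>f g :: 'a \<Rightarrow>\<^sub>L real. norm f \<le> 1 \<longrightarrow> norm g \<le> 1 \<longrightarrow>
           2 - \<eta> < norm (f + g) \<longrightarrow> norm (f - g) < \<tau>)"
proof -
  obtain \<delta> where d: "\<delta> > 0" "\<And>f g :: 'a \<Rightarrow>\<^sub>L real. norm f = 1 \<Longrightarrow> norm g = 1 \<Longrightarrow>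
      \<tau>/2 \<le> norm (f - g) \<Longrightarrow> norm (f + g) \<le> 2 - 2*\<delta>" using U tau unfolding UCd_def
    by (meson half_gt_zero)
  define \<eta> where "\<eta> = min (2*\<delta>/3) (min (\<tau>/4) 1)"
  have e: "\<eta> > 0" "\<eta> \<le> 1" "\<eta> \<le> 2*\<delta>/3" "\<eta> \<le> \<tau>/4" using d tau unfolding \<eta>_def by auto
  show ?thesis
  proof (intro exI[of _ \<eta>] conjI allI impI)
    fix f g :: "'a \<Rightarrow>\<^sub>L real" assume f: "norm f \<le> 1" and g: "norm g \<le> 1" and s: "2 - \<eta> < norm (f + g)"
    have tri: "norm (f + g) \<le> norm f + norm g" by (rule norm_triangle_ineq)
    have fp: "norm f > 1 - \<eta>" "norm g > 1 - \<eta>" using tri s f g by linarith+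
    then have fp0: "norm f > 0" "norm g > 0" using e by linarith+
    define u where "u = (1/norm f) *\<^sub>R f"
    define v where "v = (1/norm g) *\<^sub>R g"
    have u: "norm u = 1" "norm (u - f) = 1 - norm f" using normalize_close[OF fp0(1) f] u_def by auto
    have v: "norm v = 1" "norm (v - g) = 1 - norm g" using normalize_close[OF fp0(2) g] v_def by auto
    show "norm (f - g) < \<tau>"
    proof (rule ccontr)
      assume "\<not> norm (f - g) < \<tau>"
      then have fg: "\<tau> \<le> norm (f - g)" by simp
      have "u - v = (f - g) + (u - f) - (v - g)" by simp
      then have "norm (f - g) \<le> norm (u - v) + norm (u - f) + norm (v - g)"
        by (metis norm_diff_triangle_le norm_minus_commute order_refl add_mono)
      then have "\<tau>/2 \<le> norm (u - v)" using fg u v fp e by linarith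
      then have A: "norm (u + v) \<le> 2 - 2*\<delta>" using d(2)[OF u(1) v(1)] by blast
      have "f + g = (u + v) - (u - f) - (v - g)" by simp
      then have "norm (f + g) \<le> norm (u + v) + norm (u - f) + norm (v - g)"
        using norm3[of "u + v" "u - f" "v - g"] by simp
      then show False using A s u v fp e by linarith
    qed
  qed (use e in auto)
qed




lemma half_half: "(1/2) *\<^sub>R f + (1/2) *\<^sub>R f = (f::'b::real_vector)"
  by (simp add: scaleR_add_left[symmetric])

lemma app_le: "norm x = 1 \<Longrightarrow> blinfun_apply g x \<le> norm g"
  using norm_blinfun[of g x] by simp

lemma wslice_mem: "g \<in> wslice x \<alpha> \<longleftrightarrow> norm g \<le> 1 \<and> \<alpha> < blinfun_apply g x"
  unfolding wslice_def by simp

lemma wslice_bounded: "bounded (wslice x \<alpha>)"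
  by (rule bounded_subset[OF bounded_cball[of 0 1]]) (auto simp: wslice_def)

lemma slice_diam:
  assumes U: "\<forall>f g :: 'a::real_normed_vector \<Rightarrow>\<^sub>L real. norm f \<le> 1 \<longrightarrow> norm g \<le> 1 \<longrightarrow>
           2 - \<eta> < norm (f + g) \<longrightarrow> norm (f - g) < \<tau>"
    and x: "norm (x::'a) = 1" and a: "2 - \<eta> \<le> 2 * \<alpha>" and t: "0 \<le> \<tau>"
  shows "diameter (wslice x \<alpha>) \<le> \<tau>"
proof (rule diameter_le)
  show "wslice x \<alpha> \<noteq> {} \<or> 0 \<le> \<tau>" using t by simp
  fix g1 g2 assume "g1 \<in> wslice x \<alpha>" "g2 \<in> wslice x \<alpha>"
  then have g: "norm g1 \<le> 1" "norm g2 \<le> 1" "\<alpha> < blinfun_apply g1 x" "\<alpha> < blinfun_apply g2 x"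
    by (auto simp: wslice_mem)
  have "blinfun_apply (g1 + g2) x \<le> norm (g1 + g2)" using app_le[OF x] .
  then have "2 - \<eta> < norm (g1 + g2)" using g a by (simp add: plus_blinfun.rep_eq)
  then show "norm (g1 - g2) \<le> \<tau>" using U g by (meson less_imp_le)
qed

lemma C_D:
  assumes U: "UCd TYPE('a::real_normed_vector)"
  shows "uniformly_wstar_denting_I TYPE('a)"
  unfolding uniformly_wstar_denting_I_def
proof (intro allI impI)
  fix \<epsilon> :: real assume e: "\<epsilon> > 0"
  obtain \<eta> where eta: "\<eta> > 0" "\<eta> \<le> 1" "\<forall>f g :: 'a \<Rightarrow>\<^sub>L real. norm f \<le> 1 \<longrightarrow> norm g \<le> 1 \<longrightarrow>
           2 - \<eta> < norm (f + g) \<longrightarrow> norm (f - g) < \<epsilon>/2" using UCB[OF U, of "\<epsilon>/2"] e by auto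
  define \<alpha> where "\<alpha> = 1 - \<eta>/2"
  show "\<exists>\<alpha>. 0 < \<alpha> \<and> \<alpha> < 1 \<and> (\<forall>f :: 'a \<Rightarrow>\<^sub>L real. norm f = 1 \<longrightarrow>
           (\<exists>x. norm x = 1 \<and> blinfun_apply f x > \<alpha> \<and> diameter (wslice x \<alpha>) < \<epsilon>))"
  proof (intro exI[of _ \<alpha>] conjI allI impI)
    show "0 < \<alpha>" "\<alpha> < 1" using eta unfolding \<alpha>_def by auto
    fix f :: "'a \<Rightarrow>\<^sub>L real" assume "norm f = 1"
    then obtain x where x: "norm x = 1" "\<alpha> < blinfun_apply f x" using unit_gt[of \<alpha> f] eta \<alpha>_def by auto
    have "diameter (wslice x \<alpha>) \<le> \<epsilon>/2" by (rule slice_diam[OF eta(3) x(1)]) (use e \<alpha>_def in auto)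
    then show "\<exists>x. norm x = 1 \<and> blinfun_apply f x > \<alpha> \<and> diameter (wslice x \<alpha>) < \<epsilon>"
      using x e by (intro exI[of _ x]) auto
  qed
qed

lemma C_B:
  assumes U: "UCd TYPE('a::real_normed_vector)"
  shows "\<forall>\<epsilon>>0. \<exists>\<delta>>0. F_eps (X::'a itself) \<epsilon> \<subseteq> cball 0 (1 - \<delta>)"
proof (intro allI impI)
  fix \<epsilon> :: real assume e: "\<epsilon> > 0"
  obtain \<eta> where eta: "\<eta> > 0" "\<eta> \<le> 1" "\<forall>f g :: 'a \<Rightarrow>\<^sub>L real. norm f \<le> 1 \<longrightarrow> norm g \<le> 1 \<longrightarrow>
           2 - \<eta> < norm (f + g) \<longrightarrow> norm (f - g) < \<epsilon>/2" using UCB[OF U, of "\<epsilon>/2"] e by auto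
  show "\<exists>\<delta>>0. F_eps X \<epsilon> \<subseteq> cball 0 (1 - \<delta>)"
  proof (intro exI[of _ "\<eta>/4"] conjI subsetI)
    show "\<eta>/4 > 0" using eta by simp
    fix g assume gF: "g \<in> F_eps X \<epsilon>"
    show "g \<in> cball 0 (1 - \<eta>/4)"
    proof (rule ccontr)
      assume "g \<notin> cball 0 (1 - \<eta>/4)"
      then have gn: "1 - \<eta>/4 < norm g" by simp
      have g1: "norm g \<le> 1" using gF unfolding F_eps_def by simp
      define \<alpha> where "\<alpha> = 1 - \<eta>/4"
      obtain x where x: "norm x = 1" "\<alpha> < blinfun_apply g x"
        using unit_gt[of \<alpha> g] gn eta \<alpha>_def by auto
      have "diameter (wslice x \<alpha>) \<le> \<epsilon>/2" by (rule slice_diam[OF eta(3) x(1)]) (use e eta \<alpha>_def in auto)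
      then have "diameter (wslice x \<alpha>) < \<epsilon>" using e by simp
      moreover have "g \<in> wslice x \<alpha>" using g1 x by (simp add: wslice_mem)
      moreover have "0 < \<alpha>" "\<alpha> < 1" using eta \<alpha>_def by auto
      ultimately have "g \<in> \<Union> {S. \<exists>(x::'a) \<alpha>. norm x = 1 \<and> 0 < \<alpha> \<and> \<alpha> < 1 \<and>
                         S = wslice x \<alpha> \<and> diameter S < \<epsilon>}" using x(1) by blast
      then show False using gF unfolding F_eps_def by blast
    qed
  qed
qed

lemma B_C:
  assumes B: "\<forall>\<epsilon>>0. \<exists>\<delta>>0. F_eps (X::'a::real_normed_vector itself) \<epsilon> \<subseteq> cball 0 (1 - \<delta>)"
  shows "UCd TYPE('a)"
  unfolding UCd_def
proof (intro allI impI)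
  fix \<tau> :: real assume tau: "\<tau> > 0"
  obtain \<delta>0 where d0: "\<delta>0 > 0" "F_eps X (\<tau>/2) \<subseteq> cball 0 (1 - \<delta>0)" using B tau by (meson half_gt_zero)
  show "\<exists>\<delta>>0. \<forall>f g :: 'a \<Rightarrow>\<^sub>L real. norm f = 1 \<longrightarrow> norm g = 1 \<longrightarrow> \<tau> \<le> norm (f - g) \<longrightarrow> norm (f + g) \<le> 2 - 2*\<delta>"
  proof (intro exI[of _ "\<delta>0/2"] conjI allI impI)
    show "\<delta>0/2 > 0" using d0 by simp
    fix f g :: "'a \<Rightarrow>\<^sub>L real" assume f: "norm f = 1" and g: "norm g = 1" and fg: "\<tau> \<le> norm (f - g)"
    show "norm (f + g) \<le> 2 - 2*(\<delta>0/2)"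
    proof (rule ccontr)
      assume "\<not> ?thesis"
      then have s: "2 - \<delta>0 < norm (f + g)" by simp
      define m where "m = (1/2) *\<^sub>R (f + g)"
      have nm: "norm m = norm (f + g) / 2" unfolding m_def by simp
      have "norm (f + g) \<le> 2" using norm_triangle_ineq[of f g] f g by simp
      then have "m \<in> cball 0 1" using nm by simp
      moreover have "m \<notin> cball 0 (1 - \<delta>0)" using nm s d0(1) by simp
      ultimately have "m \<notin> F_eps X (\<tau>/2)" using d0 by blast
      with \<open>m \<in> cball 0 1\<close> obtain x \<alpha> where xa: "norm (x::'a) = 1" "m \<in> wslice x \<alpha>" "diameter (wslice x \<alpha>) < \<tau>/2"
        unfolding F_eps_def by blast
      have mx: "2 * blinfun_apply m x = blinfun_apply f x + blinfun_apply g x"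
        unfolding m_def by (simp add: plus_blinfun.rep_eq scaleR_blinfun.rep_eq)
      have "\<alpha> < blinfun_apply m x" using xa(2) by (simp add: wslice_mem)
      then have "\<alpha> < blinfun_apply f x \<or> \<alpha> < blinfun_apply g x"
      proof (rule contrapos_pp)
        assume "\<not> (\<alpha> < blinfun_apply f x \<or> \<alpha> < blinfun_apply g x)"
        then have "blinfun_apply f x \<le> \<alpha>" "blinfun_apply g x \<le> \<alpha>" by auto
        then show "\<not> \<alpha> < blinfun_apply m x" using mx by linarith
      qed
      then obtain p where p: "p = f \<or> p = g" "\<alpha> < blinfun_apply p x" by blast
      have "p \<in> wslice x \<alpha>" using p f g by (auto simp: wslice_mem)
      then have "dist p m \<le> diameter (wslice x \<alpha>)"
        using diameter_bounded_bound[OF wslice_bounded] xa(2) by blast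
      moreover have "norm (p - m) = norm (f - g) / 2"
      proof -
        have "f - m = (1/2) *\<^sub>R (f - g)" "g - m = (-1/2) *\<^sub>R (f - g)" unfolding m_def
          by (simp_all add: algebra_simps half_half)
        then show ?thesis using p(1) by auto
      qed
      ultimately show False using xa(3) fg by (simp add: dist_norm)
    qed
  qed
qed




lemma C_A:
  assumes U: "UCd TYPE('a::real_normed_vector)"
  shows "PA TYPE('a)"
  unfolding PA_def
proof (intro allI impI)
  fix t :: real assume t: "0 < t \<and> t < 2"
  obtain \<delta> where d: "\<delta> > 0" and dU: "\<And>f g :: 'a \<Rightarrow>\<^sub>L real. norm f = 1 \<Longrightarrow> norm g = 1 \<Longrightarrow>
      t/8 \<le> norm (f - g) \<Longrightarrow> norm (f + g) \<le> 2 - 2*\<delta>"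
    using U t unfolding UCd_def by (metis divide_pos_pos zero_less_numeral)
  define \<eta> where "\<eta> = min (\<delta>/2) (t/16)"
  have eta: "\<eta> > 0" "\<eta> \<le> \<delta>/2" "\<eta> \<le> t/16" using d t unfolding \<eta>_def by auto
  show "\<exists>c>0. \<forall>m::'a\<Rightarrow>\<^sub>L real. norm m = 1 \<longrightarrow>
     (\<exists>x::'a. norm x = 1 \<and> (\<forall>h::'a\<Rightarrow>\<^sub>L real. blinfun_apply h x = 0 \<longrightarrow> t/4 \<le> norm h \<longrightarrow> 1 + c \<le> norm (m + h)))"
  proof (intro exI[of _ \<eta>] conjI allI impI)
    show "0 < \<eta>" using eta by simp
    fix m :: "'a \<Rightarrow>\<^sub>L real" assume m1: "norm m = 1"
    obtain x where x: "norm x = 1" "1 - \<eta> < blinfun_apply m x"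
      using unit_gt[of "1 - \<eta>" m] m1 eta t by auto
    show "\<exists>x::'a. norm x = 1 \<and> (\<forall>h::'a\<Rightarrow>\<^sub>L real. blinfun_apply h x = 0 \<longrightarrow> t/4 \<le> norm h \<longrightarrow> 1 + \<eta> \<le> norm (m + h))"
    proof (intro exI[of _ x] conjI allI impI)
      show "norm x = 1" by fact
      fix h :: "'a \<Rightarrow>\<^sub>L real" assume hx: "blinfun_apply h x = 0" and ht: "t/4 \<le> norm h"
      show "1 + \<eta> \<le> norm (m + h)"
      proof (rule ccontr)
        assume "\<not> ?thesis"
        define r where "r = norm (m + h)"
        have rlt: "r < 1 + \<eta>" using \<open>\<not> _\<close> r_def by simp
        have mhx: "blinfun_apply (m + h) x = blinfun_apply m x" using hx by (simp add: plus_blinfun.rep_eq)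
        have "blinfun_apply (m + h) x \<le> r" using app_le[OF x(1)] r_def by simp
        then have rgt: "1 - \<eta> < r" using mhx x by simp
        have rpos: "r > 0" using rgt eta t by linarith
        define g where "g = (1/r) *\<^sub>R (m + h)"
        have g1: "norm g = 1" using rpos r_def g_def by simp
        have gx: "blinfun_apply g x = blinfun_apply m x / r"
          unfolding g_def using mhx by (simp add: scaleR_blinfun.rep_eq)
        have mgx: "blinfun_apply (m + g) x = blinfun_apply m x + blinfun_apply m x / r"
          using gx by (simp add: plus_blinfun.rep_eq)
        have mx0: "blinfun_apply m x \<ge> 0" using x eta t by linarith
        have q1: "blinfun_apply m x / r \<ge> blinfun_apply m x / (1 + \<eta>)"
          using rpos rlt mx0 by (intro divide_left_mono) auto
        have q2: "blinfun_apply m x / (1 + \<eta>) > (1 - \<eta>) / (1 + \<eta>)"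
          using x eta by (intro divide_strict_right_mono) auto
        have q3: "(1 - \<eta>) / (1 + \<eta>) \<ge> 1 - 3*\<eta>"
        proof -
          have "(1 - 3*\<eta>) * (1 + \<eta>) = 1 - 2*\<eta> - 3*(\<eta>*\<eta>)" by (simp add: algebra_simps)
          also have "\<dots> \<le> 1 - \<eta>" using eta by (simp add: algebra_simps)
          finally show ?thesis using eta by (simp add: pos_le_divide_eq)
        qed
        have "blinfun_apply (m + g) x \<le> norm (m + g)" using app_le[OF x(1)] .
        then have big: "2 - 4*\<eta> < norm (m + g)" using mgx q1 q2 q3 x by linarith
        have diffeq: "m - g = (1/r) *\<^sub>R ((r - 1) *\<^sub>R m - h)"
          unfolding g_def using rpos by (simp add: algebra_simps)
        have "norm h \<le> norm ((r - 1) *\<^sub>R m - h) + norm ((r - 1) *\<^sub>R m)"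
          using norm_triangle_ineq4[of "(r - 1) *\<^sub>R m" "(r - 1) *\<^sub>R m - h"] by (simp add: norm_minus_commute)
        also have "norm ((r - 1) *\<^sub>R m) = \<bar>r - 1\<bar>" using m1 by simp
        finally have n1: "norm h - \<bar>r - 1\<bar> \<le> norm ((r - 1) *\<^sub>R m - h)" by simp
        have ar: "\<bar>r - 1\<bar> < \<eta>" using rlt rgt by linarith
        have tr: "(t/8) * r \<le> t/4 - \<eta>"
        proof -
          have "(t/8) * r \<le> (t/8) * (1 + \<eta>)" using rlt t by (intro mult_left_mono) auto
          also have "(t/8) * (1 + \<eta>) = t/8 + (t/8) * \<eta>" by (simp add: algebra_simps)
          also have "(t/8) * \<eta> \<le> (2/8) * \<eta>" using t eta by (intro mult_right_mono) auto
          finally show ?thesis using eta by linarith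
        qed
        have "norm (m - g) = norm ((r - 1) *\<^sub>R m - h) / r" using diffeq rpos by simp
        also have "(t/8) \<le> norm ((r - 1) *\<^sub>R m - h) / r"
          using tr n1 ar ht rpos by (simp add: pos_le_divide_eq)
        finally have "t/8 \<le> norm (m - g)" by simp
        then have "norm (m + g) \<le> 2 - 2*\<delta>" using dU[OF m1 g1] by blast
        then show False using big eta by linarith
      qed
    qed
  qed
qed

lemma D_C:
  assumes D: "uniformly_wstar_denting_I TYPE('a::real_normed_vector)"
  shows "UCd TYPE('a)"
  unfolding UCd_def
proof (intro allI impI)
  fix \<tau> :: real assume tau: "\<tau> > 0"
  obtain \<alpha> where a: "0 < \<alpha>" "\<alpha> < 1" and aD: "\<And>f :: 'a \<Rightarrow>\<^sub>L real. norm f = 1 \<Longrightarrow>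
           (\<exists>x. norm x = 1 \<and> blinfun_apply f x > \<alpha> \<and> diameter (wslice x \<alpha>) < \<tau>/4)"
    using D tau unfolding uniformly_wstar_denting_I_def by (metis divide_pos_pos zero_less_numeral)
  define \<delta> where "\<delta> = (1 - \<alpha>)/8"
  show "\<exists>\<delta>>0. \<forall>f g :: 'a \<Rightarrow>\<^sub>L real. norm f = 1 \<longrightarrow> norm g = 1 \<longrightarrow> \<tau> \<le> norm (f - g) \<longrightarrow> norm (f + g) \<le> 2 - 2*\<delta>"
  proof (intro exI[of _ \<delta>] conjI allI impI)
    show "\<delta> > 0" using a \<delta>_def by simp
    fix f g :: "'a \<Rightarrow>\<^sub>L real" assume f: "norm f = 1" and g: "norm g = 1" and fg: "\<tau> \<le> norm (f - g)"
    show "norm (f + g) \<le> 2 - 2*\<delta>"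
    proof (rule ccontr)
      assume "\<not> ?thesis"
      define s where "s = norm (f + g)"
      have s: "2 - 2*\<delta> < s" using \<open>\<not> _\<close> s_def by simp
      have dle: "\<delta> < 1" using a \<delta>_def by simp
      have spos: "s > 0" using s dle by linarith
      define m where "m = (1/s) *\<^sub>R (f + g)"
      have m1: "norm m = 1" using spos s_def m_def by simp
      obtain x where x: "norm x = 1" "\<alpha> < blinfun_apply m x" "diameter (wslice x \<alpha>) < \<tau>/4"
        using aD[OF m1] by blast
      obtain \<phi> :: "'a \<Rightarrow>\<^sub>L real" where phi: "norm \<phi> \<le> 1" "blinfun_apply \<phi> x = norm x"
        using hahn_banach_norming by blast
      have fgx: "blinfun_apply f x + blinfun_apply g x = s * blinfun_apply m x"
        unfolding m_def using spos by (simp add: scaleR_blinfun.rep_eq plus_blinfun.rep_eq)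
      have "(2 - 2*\<delta>) * \<alpha> < s * blinfun_apply m x"
        using s x(2) a spos by (intro mult_strict_mono) auto
      moreover have "(2 - 2*\<delta>) * \<alpha> \<ge> 2*\<alpha> - 2*\<delta>"
      proof -
        have "\<delta> * \<alpha> \<le> \<delta>" using a \<delta>_def by (simp add: mult_left_le)
        then show ?thesis by (simp add: algebra_simps)
      qed
      ultimately have sum: "2*\<alpha> - 2*\<delta> < blinfun_apply f x + blinfun_apply g x" using fgx by linarith
      have fx1: "blinfun_apply f x \<le> 1" "blinfun_apply g x \<le> 1" using app_le[OF x(1), of f] app_le[OF x(1), of g] f g by auto
      have low: "4*\<alpha> - 3 < blinfun_apply f x" "4*\<alpha> - 3 < blinfun_apply g x"
      proof -
        have "8*\<delta> = 1 - \<alpha>" using \<delta>_def by simp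
        then show "4*\<alpha> - 3 < blinfun_apply f x" "4*\<alpha> - 3 < blinfun_apply g x"
          using sum fx1 a by linarith+
      qed
      define fl where "fl = (1/4) *\<^sub>R f + (3/4) *\<^sub>R \<phi>"
      define gl where "gl = (1/4) *\<^sub>R g + (3/4) *\<^sub>R \<phi>"
      have inS: "p \<in> wslice x \<alpha>" if "p = (1/4) *\<^sub>R q + (3/4) *\<^sub>R \<phi>" "norm q = 1"
        "4*\<alpha> - 3 < blinfun_apply q x" for p q
      proof -
        have "norm p \<le> norm ((1/4) *\<^sub>R q) + norm ((3/4) *\<^sub>R \<phi>)" using that(1) norm_triangle_ineq by blast
        also have "\<dots> \<le> 1" using that(2) phi(1) by simp
        finally have "norm p \<le> 1" .
        moreover have "blinfun_apply p x = blinfun_apply q x / 4 + 3/4"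
          using that(1) phi(2) x(1) by (simp add: scaleR_blinfun.rep_eq plus_blinfun.rep_eq)
        ultimately show ?thesis using that(3) by (simp add: wslice_mem)
      qed
      have "fl \<in> wslice x \<alpha>" "gl \<in> wslice x \<alpha>"
        using inS[OF fl_def f low(1)] inS[OF gl_def g low(2)] by auto
      then have "dist fl gl \<le> diameter (wslice x \<alpha>)"
        using diameter_bounded_bound[OF wslice_bounded] by blast
      moreover have "fl - gl = (1/4) *\<^sub>R (f - g)" unfolding fl_def gl_def by (simp add: algebra_simps)
      ultimately have "norm (f - g) / 4 < \<tau>/4" using x(3) by (simp add: dist_norm)
      then show False using fg by simp
    qed
  qed
qed




lemma app_abs_le: "norm x = 1 \<Longrightarrow> \<bar>blinfun_apply g x\<bar> \<le> norm g"
  using norm_blinfun[of g x] by simp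

lemma A_C:
  assumes P: "PA TYPE('a::real_normed_vector)"
  shows "UCd TYPE('a)"
  unfolding UCd_def
proof (intro allI impI)
  fix \<tau> :: real assume tau: "\<tau> > 0"
  define t where "t = min \<tau> 1 / 8"
  have t: "0 < t" "t \<le> 1/8" "8*t \<le> \<tau>" "t < 2" using tau unfolding t_def by auto
  obtain c where c: "c > 0" and cP: "\<And>m::'a\<Rightarrow>\<^sub>L real. norm m = 1 \<Longrightarrow>
     (\<exists>x::'a. norm x = 1 \<and> (\<forall>h::'a\<Rightarrow>\<^sub>L real. blinfun_apply h x = 0 \<longrightarrow> t/4 \<le> norm h \<longrightarrow> 1 + c \<le> norm (m + h)))"
    using P t unfolding PA_def by blast
  define \<delta> where "\<delta> = min (c/(1+c)) (min t (1/2))"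
  have d: "\<delta> > 0" "\<delta> \<le> c/(1+c)" "\<delta> \<le> t" "\<delta> \<le> 1/2" using c t unfolding \<delta>_def by auto
  show "\<exists>\<delta>>0. \<forall>f g :: 'a \<Rightarrow>\<^sub>L real. norm f = 1 \<longrightarrow> norm g = 1 \<longrightarrow> \<tau> \<le> norm (f - g) \<longrightarrow> norm (f + g) \<le> 2 - 2*\<delta>"
  proof (intro exI[of _ \<delta>] conjI allI impI)
    show "\<delta> > 0" by fact
    fix f g :: "'a \<Rightarrow>\<^sub>L real" assume f: "norm f = 1" and g: "norm g = 1" and fg: "\<tau> \<le> norm (f - g)"
    show "norm (f + g) \<le> 2 - 2*\<delta>"
    proof (rule ccontr)
      assume "\<not> ?thesis"
      define s where "s = norm (f + g)"
      have s: "2 - 2*\<delta> < s" using \<open>\<not> _\<close> s_def by simp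
      have spos: "s > 0" using s d by linarith
      have sle: "s \<le> 2" using norm_triangle_ineq[of f g] f g s_def by simp
      define m where "m = (1/s) *\<^sub>R (f + g)"
      have m1: "norm m = 1" using spos s_def m_def by simp
      have fgm: "f + g = s *\<^sub>R m" using spos m_def by simp
      obtain x where x: "norm x = 1" and Q: "\<And>h::'a\<Rightarrow>\<^sub>L real. blinfun_apply h x = 0 \<Longrightarrow> t/4 \<le> norm h \<Longrightarrow> 1 + c \<le> norm (m + h)"
        using cP[OF m1] by blast
      obtain \<phi> :: "'a \<Rightarrow>\<^sub>L real" where phi: "norm \<phi> \<le> 1" "blinfun_apply \<phi> x = norm x"
        using hahn_banach_norming by blast
      have mxbig: "1 - t/4 \<le> \<bar>blinfun_apply m x\<bar>"
      proof (rule ccontr)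
        assume "\<not> ?thesis"
        then have small: "\<bar>blinfun_apply m x\<bar> < 1 - t/4" by simp
        define h where "h = blinfun_apply m x *\<^sub>R \<phi> - m"
        have hx: "blinfun_apply h x = 0" unfolding h_def using phi x
          by (simp add: scaleR_blinfun.rep_eq minus_blinfun.rep_eq)
        have nphi: "norm (blinfun_apply m x *\<^sub>R \<phi>) \<le> \<bar>blinfun_apply m x\<bar>"
          using phi(1) by (simp add: mult_left_le)
        have "m = blinfun_apply m x *\<^sub>R \<phi> - h" unfolding h_def by simp
        then have "norm m \<le> norm h + norm (blinfun_apply m x *\<^sub>R \<phi>)"
          using norm_triangle_ineq4[of "blinfun_apply m x *\<^sub>R \<phi>" h] by simp
        then have "t/4 \<le> norm h" using m1 nphi small by linarith
        from Q[OF hx this] have "1 + c \<le> norm (m + h)" .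
        also have "m + h = blinfun_apply m x *\<^sub>R \<phi>" unfolding h_def by simp
        finally show False using nphi small c t by linarith
      qed
      define y where "y = (if blinfun_apply m x \<ge> 0 then x else - x)"
      have y1: "norm y = 1" using x y_def by simp
      have my: "blinfun_apply m y = \<bar>blinfun_apply m x\<bar>"
        unfolding y_def by (simp add: blinfun.minus_right)
      have Qy: "1 + c \<le> norm (m + h)" if "blinfun_apply h y = 0" "t/4 \<le> norm h" for h :: "'a \<Rightarrow>\<^sub>L real"
      proof -
        have "blinfun_apply h x = 0" using that(1) unfolding y_def
          by (cases "blinfun_apply m x \<ge> 0") (auto simp: blinfun.minus_right)
        then show ?thesis using Q that(2) by blast
      qed
      define \<mu> where "\<mu> = blinfun_apply m y"
      have mu: "1 - t/4 \<le> \<mu>" "\<mu> \<le> 1" "\<mu> > 0" "1/2 \<le> \<mu>"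
        using mxbig my app_le[OF y1, of m] m1 t unfolding \<mu>_def by auto
      define a where "a p = blinfun_apply p y / \<mu>" for p :: "'a \<Rightarrow>\<^sub>L real"
      define hh where "hh p = p - a p *\<^sub>R m" for p :: "'a \<Rightarrow>\<^sub>L real"
      have hhy: "blinfun_apply (hh p) y = 0" for p
        unfolding hh_def a_def \<mu>_def using mu \<mu>_def
        by (simp add: minus_blinfun.rep_eq scaleR_blinfun.rep_eq)
      have pdec: "p = a p *\<^sub>R m + hh p" for p unfolding hh_def by simp
      have asum: "a f + a g = s"
      proof -
        have "blinfun_apply (f + g) y = s * \<mu>" using fgm \<mu>_def by (simp add: scaleR_blinfun.rep_eq)
        then show ?thesis unfolding a_def using mu by (simp add: plus_blinfun.rep_eq add_divide_distrib[symmetric])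
      qed
      have hsum: "hh g = - hh f"
      proof -
        have "hh f + hh g = (f + g) - (a f + a g) *\<^sub>R m" unfolding hh_def by (simp add: algebra_simps)
        also have "\<dots> = 0" using fgm asum by simp
        finally show ?thesis by (simp add: eq_neg_iff_add_eq_0 add.commute)
      qed
      have abnd: "\<bar>a p\<bar> * \<mu> \<le> 1" if "norm p = 1" for p
      proof -
        have "\<bar>blinfun_apply p y\<bar> \<le> 1" using app_abs_le[OF y1, of p] that by simp
        then show ?thesis unfolding a_def using mu by (simp add: abs_divide)
      qed
      have L: "\<bar>a p\<bar> * (1 + c) \<le> 1" if p1: "norm p = 1" and hp: "t/2 \<le> norm (hh p)" for p
      proof (cases "a p = 0")
        case True then show ?thesis by simp
      next
        case False
        define k where "k = (1 / a p) *\<^sub>R hh p"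
        have ky: "blinfun_apply k y = 0" unfolding k_def using hhy by (simp add: scaleR_blinfun.rep_eq)
        have nk: "norm k = norm (hh p) / \<bar>a p\<bar>" unfolding k_def by (simp add: divide_inverse abs_inverse mult.commute)
        have ap: "\<bar>a p\<bar> \<le> 2"
        proof -
          have "\<bar>a p\<bar> * \<mu> \<le> 1" using abnd[OF p1] .
          moreover have "\<bar>a p\<bar> * (1/2) \<le> \<bar>a p\<bar> * \<mu>" using mu by (intro mult_left_mono) auto
          ultimately show ?thesis by simp
        qed
        have "t/4 \<le> norm k"
        proof -
          have "(t/4) * \<bar>a p\<bar> \<le> (t/4) * 2" using ap t by (intro mult_left_mono) auto
          also have "\<dots> \<le> norm (hh p)" using hp by simp
          finally show ?thesis using nk False by (simp add: pos_le_divide_eq)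
        qed
        from Qy[OF ky this] have "1 + c \<le> norm (m + k)" .
        moreover have "p = a p *\<^sub>R (m + k)" unfolding k_def using False pdec[of p] by (simp add: scaleR_add_right)
        then have "norm p = \<bar>a p\<bar> * norm (m + k)" by (metis norm_scaleR)
        ultimately show ?thesis using p1 by (metis abs_ge_zero mult_left_mono)
      qed
      show False
      proof (cases "t/2 \<le> norm (hh f)")
        case True
        have "t/2 \<le> norm (hh g)" using True hsum by simp
        then have "a f * (1 + c) \<le> 1" "a g * (1 + c) \<le> 1" using L[OF f True] L[OF g] c
          by (smt (verit, best) abs_ge_self mult_right_mono)+
        moreover have "s * (1 + c) = a f * (1 + c) + a g * (1 + c)" using asum by (metis distrib_right)
        ultimately have "s * (1 + c) \<le> 2" by linarith
        then have "s \<le> 2 / (1 + c)" using c by (simp add: pos_le_divide_eq)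
        moreover have "2 / (1 + c) = 2 - 2 * (c / (1 + c))" using c by (simp add: field_simps)
        ultimately show False using s d by linarith
      next
        case False
        have "f - g = (a f *\<^sub>R m + hh f) - (a g *\<^sub>R m + hh g)" by (simp add: hh_def)
        also have "\<dots> = (a f - a g) *\<^sub>R m + 2 *\<^sub>R hh f"
          using hsum by (simp add: algebra_simps scaleR_2)
        finally have "f - g = (a f - a g) *\<^sub>R m + 2 *\<^sub>R hh f" .
        then have "norm (f - g) \<le> \<bar>a f - a g\<bar> + 2 * norm (hh f)"
          using norm_triangle_ineq[of "(a f - a g) *\<^sub>R m" "2 *\<^sub>R hh f"] m1 by simp
        then have "7 * t < \<bar>a f - a g\<bar>" using fg False t by linarith
        then obtain p where p: "norm p = 1" "(s + 7*t) / 2 < a p"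
          using asum f g by (cases "a f \<ge> a g") (auto intro!: that[of f] that[of g])
        have "s + 7*t < 2 * a p" using p(2) by (simp add: field_simps)
        then have "2 + 5*t < 2 * a p" using s d by linarith
        then have "1 + 5*t/2 < a p" by (simp add: field_simps)
        then have "(1 + 5*t/2) * (1 - t/4) \<le> a p * \<mu>"
          using mu t by (intro mult_mono) auto
        moreover have "(1 + 5*t/2) * (1 - t/4) > 1"
        proof -
          have "(1 + 5*t/2) * (1 - t/4) = 1 + t * (9/4 - 5*t/8)" by (simp add: field_simps)
          moreover have "t * (9/4 - 5*t/8) > 0" using t by (intro mult_pos_pos) auto
          ultimately show ?thesis by simp
        qed
        moreover have "\<bar>a p\<bar> * \<mu> \<le> 1" using abnd[OF p(1)] .
        ultimately show False by (smt (verit) abs_ge_self mu(3) mult_right_mono)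
      qed
    qed
  qed
qed




lemma ball_inf:
  fixes \<phi> :: "'a::real_normed_vector \<Rightarrow>\<^sub>L real"
  assumes n: "norm \<phi> = 1" and r: "0 \<le> r" and B: "\<forall>y\<in>cball x0 r. b \<le> blinfun_apply \<phi> y"
  shows "b \<le> blinfun_apply \<phi> x0 - r"
proof (rule ccontr)
  assume "\<not> ?thesis"
  then have lt: "blinfun_apply \<phi> x0 - r < b" by simp
  show False
  proof (cases "r = 0")
    case True then show False using B lt by auto
  next
    case False
    then have rp: "r > 0" using r by simp
    define d where "d = b - (blinfun_apply \<phi> x0 - r)"
    have dp: "d > 0" using lt d_def by simp
    define \<rho> where "\<rho> = max 0 (1 - d/(2*r))"
    have "\<rho> < 1" using dp rp \<rho>_def by auto
    then obtain v where v: "norm v = 1" "\<rho> < blinfun_apply \<phi> v" using unit_gt[of \<rho> \<phi>] n \<rho>_def by auto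
    have "x0 - r *\<^sub>R v \<in> cball x0 r" using v rp by (simp add: dist_norm)
    then have "b \<le> blinfun_apply \<phi> (x0 - r *\<^sub>R v)" using B by blast
    also have "\<dots> = blinfun_apply \<phi> x0 - r * blinfun_apply \<phi> v" by (simp add: blinfun.diff_right blinfun.scaleR_right)
    also have "r * blinfun_apply \<phi> v \<ge> r * (1 - d/(2*r))"
      using v \<rho>_def rp by (intro mult_left_mono) auto
    then have "blinfun_apply \<phi> x0 - r * blinfun_apply \<phi> v \<le> blinfun_apply \<phi> x0 - r * (1 - d/(2*r))" by simp
    also have "r * (1 - d/(2*r)) = r - d/2" using rp by (simp add: field_simps)
    finally have "b \<le> blinfun_apply \<phi> x0 - (r - d/2)" .
    then show False using d_def dp by (simp add: field_simps)
  qed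
qed

lemma C_E:
  assumes U: "UCd TYPE('a::real_normed_vector)"
  shows "H_UMIP TYPE('a)"
  unfolding H_UMIP_def
proof (intro allI impI)
  fix \<epsilon> M :: real assume e: "\<epsilon> > 0" and M: "M \<ge> 1"
  obtain \<eta>0 where eta0: "\<eta>0 > 0" "\<eta>0 \<le> 1" and U0: "\<forall>f g :: 'a \<Rightarrow>\<^sub>L real. norm f \<le> 1 \<longrightarrow> norm g \<le> 1 \<longrightarrow>
           2 - \<eta>0 < norm (f + g) \<longrightarrow> norm (f - g) < \<epsilon>/(4*M)"
    using UCB[OF U, of "\<epsilon>/(4*M)"] e M by auto
  define R where "R = max \<epsilon> (4*M/\<eta>0)"
  have R: "R \<ge> \<epsilon>" "R \<ge> 4*M/\<eta>0" "R > 0" using e unfolding R_def by auto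
  have MR: "2*M/R \<le> \<eta>0/2"
  proof -
    have "4*M \<le> R * \<eta>0" using R(2) pos_divide_le_eq[OF eta0(1)] by blast
    then have "2*M \<le> (\<eta>0/2) * R" by (simp add: mult.commute)
    then show ?thesis using pos_divide_le_eq[OF R(3)] by blast
  qed
  define \<eta> where "\<eta> = min (\<eta>0/2) (\<epsilon>/(4*R))"
  have eta: "\<eta> > 0" "\<eta> \<le> \<eta>0/2" "R * \<eta> \<le> \<epsilon>/4" "\<eta> \<le> 1/2"
  proof -
    show "\<eta> > 0" "\<eta> \<le> \<eta>0/2" "\<eta> \<le> 1/2" using eta0 e R unfolding \<eta>_def by auto
    have "\<eta> \<le> \<epsilon>/(4*R)" unfolding \<eta>_def by simp
    then have "R * \<eta> \<le> R * (\<epsilon>/(4*R))" using R by (intro mult_left_mono) auto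
    then show "R * \<eta> \<le> \<epsilon>/4" using R by simp
  qed
  show "\<exists>K>0. \<forall>(C::'a set) (f::'a \<Rightarrow>\<^sub>L real).
        closed C \<and> convex C \<and> norm f = 1 \<and> (\<forall>x\<in>C. norm x \<le> M) \<and>
        (\<forall>x\<in>C. blinfun_apply f x \<ge> \<epsilon>) \<longrightarrow>
        (\<exists>x0 r0. 0 \<le> r0 \<and> C \<subseteq> cball x0 r0 \<and>
                 (\<forall>y\<in>cball x0 r0. blinfun_apply f y \<ge> \<epsilon> / 2) \<and> r0 \<le> K)"
  proof (intro exI[of _ R] conjI allI impI)
    show "R > 0" by fact
    fix C :: "'a set" and f :: "'a \<Rightarrow>\<^sub>L real"
    assume H: "closed C \<and> convex C \<and> norm f = 1 \<and> (\<forall>x\<in>C. norm x \<le> M) \<and> (\<forall>x\<in>C. blinfun_apply f x \<ge> \<epsilon>)"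
    then have f1: "norm f = 1" and CM: "\<And>x. x \<in> C \<Longrightarrow> norm x \<le> M" and Cf: "\<And>x. x \<in> C \<Longrightarrow> \<epsilon> \<le> blinfun_apply f x"
      by auto
    obtain u where u: "norm u = 1" "1 - \<eta> < blinfun_apply f u" using unit_gt[of "1 - \<eta>" f] f1 eta by auto
    have fu1: "blinfun_apply f u \<le> 1" using app_le[OF u(1), of f] f1 by simp
    define x0 where "x0 = R *\<^sub>R u"
    define r0 where "r0 = R * blinfun_apply f u - \<epsilon>/2"
    have fx0: "blinfun_apply f x0 = R * blinfun_apply f u" unfolding x0_def by (simp add: blinfun.scaleR_right)
    have Rfu: "R - \<epsilon>/4 < R * blinfun_apply f u"
    proof -
      have "R * (1 - \<eta>) < R * blinfun_apply f u" using u R by (intro mult_strict_left_mono) auto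
      then show ?thesis using eta by (simp add: algebra_simps)
    qed
    show "\<exists>x0 r0. 0 \<le> r0 \<and> C \<subseteq> cball x0 r0 \<and> (\<forall>y\<in>cball x0 r0. blinfun_apply f y \<ge> \<epsilon> / 2) \<and> r0 \<le> R"
    proof (intro exI[of _ x0] exI[of _ r0] conjI)
      show "0 \<le> r0"
      proof -
        have "\<epsilon>/2 + \<epsilon>/4 \<le> \<epsilon>" using e by simp
        then show ?thesis unfolding r0_def using Rfu R(1) by linarith
      qed
      show "r0 \<le> R"
      proof -
        have "R * blinfun_apply f u \<le> R" using mult_left_le[OF fu1] R(3) by simp
        moreover have "0 < \<epsilon>/2" using e by simp
        ultimately show ?thesis unfolding r0_def by linarith
      qed
      show "\<forall>y\<in>cball x0 r0. \<epsilon> / 2 \<le> blinfun_apply f y"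
      proof
        fix y assume "y \<in> cball x0 r0"
        then have "norm (x0 - y) \<le> r0" by (simp add: dist_norm)
        moreover have "blinfun_apply f (x0 - y) \<le> norm (x0 - y)"
          using norm_blinfun[of f "x0 - y"] f1 by simp
        ultimately have "blinfun_apply f x0 - blinfun_apply f y \<le> r0" by (simp add: blinfun.diff_right)
        then show "\<epsilon> / 2 \<le> blinfun_apply f y" using fx0 r0_def by simp
      qed
      show "C \<subseteq> cball x0 r0"
      proof
        fix c assume cC: "c \<in> C"
        obtain k :: "'a \<Rightarrow>\<^sub>L real" where k: "norm k \<le> 1" "blinfun_apply k (x0 - c) = norm (x0 - c)"
          using hahn_banach_norming by blast
        have kx: "blinfun_apply k (x0 - c) = R * blinfun_apply k u - blinfun_apply k c"
          unfolding x0_def by (simp add: blinfun.diff_right blinfun.scaleR_right)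
        have nc: "norm c \<le> M" using CM[OF cC] .
        have "R - M \<le> norm (x0 - c)"
          using norm_triangle_ineq2[of x0 c] u R nc unfolding x0_def by simp
        moreover have "blinfun_apply k c \<ge> - M"
        proof -
          have "\<bar>blinfun_apply k c\<bar> \<le> norm k * norm c" using norm_blinfun[of k c] by simp
          also have "\<dots> \<le> 1 * M" using k(1) nc by (intro mult_mono) auto
          finally show ?thesis by simp
        qed
        ultimately have "R - 2*M \<le> R * blinfun_apply k u" using k(2) kx by linarith
        then have "(R - 2*M)/R \<le> blinfun_apply k u" using pos_divide_le_eq[OF R(3)] by (simp add: mult.commute)
        moreover have "(R - 2*M)/R = 1 - 2*M/R" using R(3) by (simp add: diff_divide_distrib)
        ultimately have ku: "1 - \<eta>0/2 \<le> blinfun_apply k u" using MR by linarith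
        have "blinfun_apply (k + f) u \<le> norm (k + f)" using app_le[OF u(1)] .
        then have "2 - \<eta>0 < norm (k + f)" using ku u eta by (simp add: plus_blinfun.rep_eq)
        then have kf: "norm (k - f) < \<epsilon>/(4*M)" using U0 k(1) f1 by simp
        have "\<bar>blinfun_apply (k - f) c\<bar> \<le> norm (k - f) * norm c" using norm_blinfun[of "k - f" c] by simp
        also have "\<dots> \<le> (\<epsilon>/(4*M)) * M" using kf nc e M by (intro mult_mono) auto
        also have "\<dots> = \<epsilon>/4" using M by simp
        finally have "\<bar>blinfun_apply k c - blinfun_apply f c\<bar> \<le> \<epsilon>/4" by (simp add: minus_blinfun.rep_eq)
        then have "blinfun_apply k c - blinfun_apply f c \<le> \<epsilon>/4 \<and> - (blinfun_apply k c - blinfun_apply f c) \<le> \<epsilon>/4"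
          by (simp only: abs_le_iff)
        then have "blinfun_apply f c - blinfun_apply k c \<le> \<epsilon>/4" by simp
        then have kc: "3*\<epsilon>/4 \<le> blinfun_apply k c" using Cf[OF cC] by simp
        have ku1: "blinfun_apply k u \<le> 1" using app_le[OF u(1), of k] k(1) by simp
        have "R * blinfun_apply k u \<le> R" using mult_left_le[OF ku1] R(3) by simp
        then have n1: "norm (x0 - c) \<le> R - 3*\<epsilon>/4" using k(2) kx kc by linarith
        have "R - 3*\<epsilon>/4 \<le> r0"
        proof -
          have "R - 3*\<epsilon>/4 = (R - \<epsilon>/4) - \<epsilon>/2" by simp
          then show ?thesis unfolding r0_def using Rfu by linarith
        qed
        then have "norm (x0 - c) \<le> r0" using n1 by linarith
        then show "c \<in> cball x0 r0" by (simp add: dist_norm)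
      qed
    qed
  qed
qed




lemma E_C:
  assumes E: "H_UMIP TYPE('a::real_normed_vector)"
  shows "UCd TYPE('a)"
  unfolding UCd_def
proof (intro allI impI)
  fix \<tau> :: real assume tau: "\<tau> > 0"
  define lam where "lam = 16/\<tau>"
  have lamf: "lam > 0" "lam * \<tau> = 16" using tau unfolding lam_def by auto
  define M where "M = 3 + 2*lam"
  have M: "M \<ge> 1" using lamf M_def by simp
  obtain K where K: "K > 0" and KE: "\<And>(C::'a set) (f::'a \<Rightarrow>\<^sub>L real).
        closed C \<and> convex C \<and> norm f = 1 \<and> (\<forall>x\<in>C. norm x \<le> M) \<and>
        (\<forall>x\<in>C. blinfun_apply f x \<ge> 1) \<Longrightarrow>
        (\<exists>x0 r0. 0 \<le> r0 \<and> C \<subseteq> cball x0 r0 \<and>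
                 (\<forall>y\<in>cball x0 r0. blinfun_apply f y \<ge> 1 / 2) \<and> r0 \<le> K)"
    using E M unfolding H_UMIP_def by (metis zero_less_one)
  define \<delta> where "\<delta> = 1 / (2*K + 8*lam + 4)"
  have dpos: "\<delta> > 0" using K lamf \<delta>_def by simp
  have dK: "\<delta> * (2*K + 8*lam + 4) = 1" using K lamf \<delta>_def by simp
  have d: "\<delta> \<le> 1/4" "\<delta> * (3 + 8*lam) \<le> 2" "\<delta> * (2*K + 1 + 8*lam) < 1"
  proof -
    have "\<delta> * 4 \<le> \<delta> * (2*K + 8*lam + 4)" using dpos K lamf by (intro mult_left_mono) auto
    then show "\<delta> \<le> 1/4" using dK by simp
    have "\<delta> * (3 + 8*lam) \<le> \<delta> * (2*K + 8*lam + 4)" using dpos K lamf by (intro mult_left_mono) auto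
    then show "\<delta> * (3 + 8*lam) \<le> 2" using dK by simp
    have "\<delta> * (2*K + 1 + 8*lam) < \<delta> * (2*K + 8*lam + 4)" using dpos K lamf by (intro mult_strict_left_mono) auto
    then show "\<delta> * (2*K + 1 + 8*lam) < 1" using dK by simp
  qed
  show "\<exists>\<delta>>0. \<forall>f g :: 'a \<Rightarrow>\<^sub>L real. norm f = 1 \<longrightarrow> norm g = 1 \<longrightarrow> \<tau> \<le> norm (f - g) \<longrightarrow> norm (f + g) \<le> 2 - 2*\<delta>"
  proof (intro exI[of _ \<delta>] conjI allI impI)
    show "\<delta> > 0" by fact
    fix f g :: "'a \<Rightarrow>\<^sub>L real" assume f: "norm f = 1" and g: "norm g = 1" and fg: "\<tau> \<le> norm (f - g)"
    show "norm (f + g) \<le> 2 - 2*\<delta>"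
    proof (rule ccontr)
      assume "\<not> ?thesis"
      define s where "s = norm (f + g)"
      have s: "2 - 2*\<delta> < s" using \<open>\<not> _\<close> s_def by simp
      have s1: "s \<ge> 1" using s d by linarith
      define \<phi> where "\<phi> = (1/s) *\<^sub>R (f + g)"
      have fg0: "f + g \<noteq> 0" using s1 s_def by auto
      have phi1: "norm \<phi> = 1" using fg0 s_def \<phi>_def by simp
      have phiapp: "blinfun_apply \<phi> v = (blinfun_apply f v + blinfun_apply g v) / s" for v
        unfolding \<phi>_def by (simp add: scaleR_blinfun.rep_eq plus_blinfun.rep_eq)
      obtain z where z: "norm z = 1" "\<tau>/2 < blinfun_apply (f - g) z"
        using unit_gt[of "\<tau>/2" "f - g"] tau fg by auto
      obtain w where w: "norm w = 1" "1 - \<delta> < blinfun_apply \<phi> w"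
        using unit_gt[of "1 - \<delta>" \<phi>] phi1 d dpos by auto
      have fw1: "blinfun_apply f w \<le> 1" "blinfun_apply g w \<le> 1"
        using app_le[OF w(1), of f] app_le[OF w(1), of g] f g by auto
      have fgw: "blinfun_apply f w + blinfun_apply g w = s * blinfun_apply \<phi> w" using phiapp s1 by simp
      have "(2 - 2*\<delta>) * (1 - \<delta>) \<le> s * blinfun_apply \<phi> w"
        using s w d by (intro mult_mono) auto
      moreover have "(2 - 2*\<delta>) * (1 - \<delta>) \<ge> 2 - 4*\<delta>"
      proof -
        have "(2 - 2*\<delta>) * (1 - \<delta>) = 2 - 4*\<delta> + 2*(\<delta>*\<delta>)" by (simp add: algebra_simps)
        then show ?thesis by simp
      qed
      ultimately have fgw2: "2 - 4*\<delta> \<le> blinfun_apply f w + blinfun_apply g w" using fgw by linarith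
      define e where "e = 4*\<delta>"
      have ew: "0 \<le> 1 - blinfun_apply f w" "1 - blinfun_apply f w \<le> e"
               "0 \<le> 1 - blinfun_apply g w" "1 - blinfun_apply g w \<le> e"
        using fw1 fgw2 e_def by linarith+
      define \<beta> where "\<beta> = (blinfun_apply f z + blinfun_apply g z) / 2"
      have beta: "\<bar>\<beta>\<bar> \<le> 1"
      proof -
        have "\<bar>blinfun_apply f z\<bar> \<le> 1" "\<bar>blinfun_apply g z\<bar> \<le> 1"
          using app_abs_le[OF z(1), of f] app_abs_le[OF z(1), of g] f g by auto
        then show ?thesis unfolding \<beta>_def by (simp add: abs_le_iff)
      qed
      define u where "u = z - \<beta> *\<^sub>R w"
      have nu: "norm u \<le> 2"
      proof -
        have "norm u \<le> norm z + norm (\<beta> *\<^sub>R w)" unfolding u_def by (rule norm_triangle_ineq4)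
        then show ?thesis using z w beta by simp
      qed
      have fzgz: "blinfun_apply f z - blinfun_apply g z > \<tau>/2" using z(2) by (simp add: minus_blinfun.rep_eq)
      have fu: "blinfun_apply f u = (blinfun_apply f z - blinfun_apply g z)/2 + \<beta> * (1 - blinfun_apply f w)"
        unfolding u_def \<beta>_def by (simp add: blinfun.diff_right blinfun.scaleR_right field_simps)
      have gu: "blinfun_apply g u = (blinfun_apply g z - blinfun_apply f z)/2 + \<beta> * (1 - blinfun_apply g w)"
        unfolding u_def \<beta>_def by (simp add: blinfun.diff_right blinfun.scaleR_right field_simps)
      have bf: "-e \<le> \<beta> * (1 - blinfun_apply f w)" "\<beta> * (1 - blinfun_apply f w) \<le> e"
               "-e \<le> \<beta> * (1 - blinfun_apply g w)" "\<beta> * (1 - blinfun_apply g w) \<le> e"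
      proof -
        have "\<bar>\<beta>\<bar> * (1 - blinfun_apply f w) \<le> 1 * e" using beta ew by (intro mult_mono) auto
        moreover have "\<bar>\<beta> * (1 - blinfun_apply f w)\<bar> = \<bar>\<beta>\<bar> * (1 - blinfun_apply f w)" using ew by (simp add: abs_mult)
        ultimately have A: "\<bar>\<beta> * (1 - blinfun_apply f w)\<bar> \<le> e" by simp
        have "\<bar>\<beta>\<bar> * (1 - blinfun_apply g w) \<le> 1 * e" using beta ew by (intro mult_mono) auto
        moreover have "\<bar>\<beta> * (1 - blinfun_apply g w)\<bar> = \<bar>\<beta>\<bar> * (1 - blinfun_apply g w)" using ew by (simp add: abs_mult)
        ultimately have B: "\<bar>\<beta> * (1 - blinfun_apply g w)\<bar> \<le> e" by simp
        show "-e \<le> \<beta> * (1 - blinfun_apply f w)" "\<beta> * (1 - blinfun_apply f w) \<le> e"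
             "-e \<le> \<beta> * (1 - blinfun_apply g w)" "\<beta> * (1 - blinfun_apply g w) \<le> e"
          using A B by (simp_all only: abs_le_iff) linarith+
      qed
      have half: "\<tau>/4 < (blinfun_apply f z - blinfun_apply g z)/2" "(blinfun_apply g z - blinfun_apply f z)/2 < - \<tau>/4"
        using fzgz by simp_all
      have fu2: "\<tau>/4 - e \<le> blinfun_apply f u" using fu half bf by linarith
      have gu2: "blinfun_apply g u \<le> - \<tau>/4 + e" using gu half bf by linarith
      have phu: "\<bar>blinfun_apply \<phi> u\<bar> \<le> 2*e"
      proof -
        have hs: "(blinfun_apply f z - blinfun_apply g z)/2 + (blinfun_apply g z - blinfun_apply f z)/2 = 0"
          by (simp add: field_simps)
        have "blinfun_apply f u + blinfun_apply g u = \<beta> * (1 - blinfun_apply f w) + \<beta> * (1 - blinfun_apply g w)"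
          using fu gu hs by linarith
        then have X: "\<bar>blinfun_apply f u + blinfun_apply g u\<bar> \<le> 2*e" using bf by (simp only: abs_le_iff) linarith
        have Y: "\<bar>blinfun_apply \<phi> u\<bar> = \<bar>blinfun_apply f u + blinfun_apply g u\<bar> / s"
          using phiapp s1 by (simp add: abs_divide)
        have Z: "\<bar>blinfun_apply f u + blinfun_apply g u\<bar> / s \<le> \<bar>blinfun_apply f u + blinfun_apply g u\<bar> / 1"
          using s1 by (intro divide_left_mono) auto
        show ?thesis using X Y Z by simp
      qed
      define a where "a = 3 *\<^sub>R w - lam *\<^sub>R u"
      define b where "b = 3 *\<^sub>R w + lam *\<^sub>R u"
      have lu: "lam * (\<tau>/4) = 4" using lamf by (simp add: field_simps)
      have fa: "blinfun_apply f a \<le> lam * e - 1"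
      proof -
        have "blinfun_apply f a = 3 * blinfun_apply f w - lam * blinfun_apply f u"
          unfolding a_def by (simp add: blinfun.diff_right blinfun.scaleR_right)
        moreover have "lam * (\<tau>/4 - e) \<le> lam * blinfun_apply f u" using fu2 lamf by (intro mult_left_mono) auto
        moreover have "lam * (\<tau>/4 - e) = 4 - lam * e" using lu by (simp add: right_diff_distrib)
        moreover have "3 * blinfun_apply f w \<le> 3" using fw1 by simp
        ultimately show ?thesis by linarith
      qed
      have gb: "blinfun_apply g b \<le> lam * e - 1"
      proof -
        have "blinfun_apply g b = 3 * blinfun_apply g w + lam * blinfun_apply g u"
          unfolding b_def by (simp add: blinfun.add_right blinfun.scaleR_right)
        moreover have "lam * blinfun_apply g u \<le> lam * (- \<tau>/4 + e)" using gu2 lamf by (intro mult_left_mono) auto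
        moreover have "lam * (- \<tau>/4 + e) = lam * e - lam * (\<tau>/4)" by (simp add: algebra_simps)
        moreover have "3 * blinfun_apply g w \<le> 3" using fw1 by simp
        ultimately show ?thesis using lu by linarith
      qed
      have lphu: "\<bar>lam * blinfun_apply \<phi> u\<bar> \<le> lam * (2*e)"
        using phu lamf by (simp add: abs_mult)
      have phab: "1 \<le> blinfun_apply \<phi> a" "1 \<le> blinfun_apply \<phi> b"
      proof -
        have pa: "blinfun_apply \<phi> a = 3 * blinfun_apply \<phi> w - lam * blinfun_apply \<phi> u"
          unfolding a_def by (simp add: blinfun.diff_right blinfun.scaleR_right)
        have pb: "blinfun_apply \<phi> b = 3 * blinfun_apply \<phi> w + lam * blinfun_apply \<phi> u"
          unfolding b_def by (simp add: blinfun.add_right blinfun.scaleR_right)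
        have "lam * (2*e) = \<delta> * (8*lam)" using e_def by simp
        moreover have "\<delta> * (3 + 8*lam) = 3*\<delta> + \<delta> * (8*lam)" by (simp add: algebra_simps)
        moreover have "3 * (1 - \<delta>) = 3 - 3*\<delta>" by simp
        ultimately have "3 * (1 - \<delta>) - lam * (2*e) \<ge> 1" using d(2) by linarith
        moreover have "- (lam * (2*e)) \<le> lam * blinfun_apply \<phi> u" "lam * blinfun_apply \<phi> u \<le> lam * (2*e)"
          using lphu by (simp_all only: abs_le_iff) linarith+
        moreover have "3 * (1 - \<delta>) = 3 - 3*\<delta>" by simp
        ultimately show "1 \<le> blinfun_apply \<phi> a" "1 \<le> blinfun_apply \<phi> b" using pa pb w by linarith+
      qed
      have nab: "norm a \<le> M" "norm b \<le> M"
      proof -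
        have "norm (lam *\<^sub>R u) \<le> 2*lam" using nu lamf by (simp add: mult_left_mono)
        moreover have "norm (3 *\<^sub>R w) = 3" using w by simp
        ultimately show "norm a \<le> M" "norm b \<le> M" unfolding a_def b_def M_def
          using norm_triangle_ineq4[of "3 *\<^sub>R w" "lam *\<^sub>R u"] norm_triangle_ineq[of "3 *\<^sub>R w" "lam *\<^sub>R u"] by linarith+
      qed
      define C where "C = closed_segment a b"
      have Cprop: "closed C \<and> convex C \<and> norm \<phi> = 1 \<and> (\<forall>x\<in>C. norm x \<le> M) \<and> (\<forall>x\<in>C. blinfun_apply \<phi> x \<ge> 1)"
      proof (intro conjI ballI)
        show "closed C" "convex C" unfolding C_def by auto
        show "norm \<phi> = 1" by fact
        fix x assume "x \<in> C"
        then obtain \<theta> where th: "0 \<le> \<theta>" "\<theta> \<le> 1" "x = (1 - \<theta>) *\<^sub>R a + \<theta> *\<^sub>R b"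
          unfolding C_def in_segment by blast
        have "norm x \<le> (1 - \<theta>) * norm a + \<theta> * norm b"
          using th norm_triangle_ineq[of "(1 - \<theta>) *\<^sub>R a" "\<theta> *\<^sub>R b"] by simp
        also have "\<dots> \<le> (1 - \<theta>) * M + \<theta> * M" using th nab by (intro add_mono mult_left_mono) auto
        finally show "norm x \<le> M" by (simp add: algebra_simps)
        have "blinfun_apply \<phi> x = (1 - \<theta>) * blinfun_apply \<phi> a + \<theta> * blinfun_apply \<phi> b"
          using th by (simp add: blinfun.add_right blinfun.scaleR_right)
        also have "\<dots> \<ge> (1 - \<theta>) * 1 + \<theta> * 1" using th phab by (intro add_mono mult_left_mono) auto
        finally show "1 \<le> blinfun_apply \<phi> x" by simp
      qed
      obtain x0 r0 where X: "0 \<le> r0" "C \<subseteq> cball x0 r0" "\<forall>y\<in>cball x0 r0. blinfun_apply \<phi> y \<ge> 1/2" "r0 \<le> K"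
        using KE[OF Cprop] by blast
      have px0: "1/2 \<le> blinfun_apply \<phi> x0 - r0" using ball_inf[OF phi1 X(1) X(3)] .
      have aC: "a \<in> C" "b \<in> C" unfolding C_def by auto
      have fx0: "blinfun_apply f x0 \<le> blinfun_apply f a + r0"
      proof -
        have "norm (x0 - a) \<le> r0" using X(2) aC(1) by (auto simp: dist_norm)
        moreover have "blinfun_apply f (x0 - a) \<le> norm (x0 - a)" using norm_blinfun[of f "x0 - a"] f by simp
        ultimately show ?thesis by (simp add: blinfun.diff_right)
      qed
      have gx0: "blinfun_apply g x0 \<le> blinfun_apply g b + r0"
      proof -
        have "norm (x0 - b) \<le> r0" using X(2) aC(2) by (auto simp: dist_norm)
        moreover have "blinfun_apply g (x0 - b) \<le> norm (x0 - b)" using norm_blinfun[of g "x0 - b"] g by simp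
        ultimately show ?thesis by (simp add: blinfun.diff_right)
      qed
      have "s * blinfun_apply \<phi> x0 = blinfun_apply f x0 + blinfun_apply g x0" using phiapp s1 by simp
      moreover have "(2 - 2*\<delta>) * (r0 + 1/2) < s * blinfun_apply \<phi> x0"
      proof (rule mult_less_le_imp_less)
        show "2 - 2*\<delta> < s" by fact
        show "r0 + 1/2 \<le> blinfun_apply \<phi> x0" using px0 by simp
        show "0 \<le> 2 - 2*\<delta>" using d by simp
        show "0 < r0 + 1/2" using X(1) by simp
      qed
      ultimately have A: "(2 - 2*\<delta>) * (r0 + 1/2) < 2*r0 - 2 + 2*(lam*e)" using fx0 gx0 fa gb by linarith
      have B: "(2 - 2*\<delta>) * (r0 + 1/2) = 2*r0 + 1 - \<delta> * (2*r0 + 1)" by (simp add: algebra_simps)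
      have C: "2*(lam*e) = \<delta> * (8*lam)" using e_def by simp
      have D: "\<delta> * (2*r0 + 1) \<le> \<delta> * (2*K + 1)" using X(4) dpos by (intro mult_left_mono) auto
      have E: "\<delta> * (2*K + 1) + \<delta> * (8*lam) = \<delta> * (2*K + 1 + 8*lam)" by (simp add: algebra_simps)
      show False using A B C D E d(3) by linarith
    qed
  qed
qed


theorem mainTheorem9:
  fixes X :: "'a::banach itself"
  defines "A \<equiv> (\<forall>t. 0 < t \<and> t < 2 \<longrightarrow> d_star X t > 0)"
      and "B \<equiv> (\<forall>\<epsilon>>0. \<exists>\<delta>>0. F_eps X \<epsilon> \<subseteq> cball 0 (1 - \<delta>))"
      and "C \<equiv> uniformly_convex TYPE('a \<Rightarrow>\<^sub>L real)"
      and "D \<equiv> uniformly_wstar_denting_I X"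
      and "E \<equiv> H_UMIP X"
  shows "(A \<longleftrightarrow> B) \<and> (A \<longleftrightarrow> C) \<and> (A \<longleftrightarrow> D) \<and> (A \<longleftrightarrow> E)"
proof -
  have hA: "A \<longleftrightarrow> UCd TYPE('a)" unfolding A_def A_iff using A_C C_A by blast
  have hB: "B \<longleftrightarrow> UCd TYPE('a)" unfolding B_def using B_C C_B by blast
  have hC: "C \<longleftrightarrow> UCd TYPE('a)" unfolding C_def by (rule uc_iff)
  have D': "D \<longleftrightarrow> uniformly_wstar_denting_I TYPE('a)" unfolding D_def uniformly_wstar_denting_I_def by simp
  have hD: "D \<longleftrightarrow> UCd TYPE('a)" unfolding D' using D_C C_D by blast
  have E': "E \<longleftrightarrow> H_UMIP TYPE('a)" unfolding E_def H_UMIP_def by simp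
  have hE: "E \<longleftrightarrow> UCd TYPE('a)" unfolding E' using E_C C_E by blast
  show ?thesis using hA hB hC hD hE by blast
qed

end
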